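(* Let $m\ge 2$, $\alpha>0$ and let $K\subset X_m$ be compact. For a finite index subgroup $\Lambda<\mathbb{Z}^m$ let $\mathcal{G}=C_{\mathbb{Z}^m/\Lambda}(I)$ (undirected case) or $\mathcal{G}=C^+_{\mathbb{Z}^m/\Lambda}(I)$ (directed case), let $\xi(\mathcal{G})=\big(|V_{\mathcal{G}}|^{-2}\sum_{x,y\in V_{\mathcal{G}}}d_{\mathcal{G}}^\alpha(x,y)\big)^{1/\alpha}$, and let $\zeta(L)=\big(\lambda(\mathbb{R}^m/L)^{-1}\int_{\mathbb{R}^m/L}d^\alpha_{\mathbb{R}^m/L}(0,x)\,d\lambda(x)\big)^{1/\alpha}$ for lattices $L<\mathbb{R}^m$, with the distance (resp. non-symmetric distance) of the corresponding case. Then for every $\varepsilon>0$ there is $N$ such that for every finite index subgroup $\Lambda<\mathbb{Z}^m$ with $\bar\Lambda\in K$ and $|\Lambda|>N$, $\big||\Lambda|^{-1/m}\xi(\mathcal{G})-\zeta(\bar\Lambda)\big|<\varepsilon$.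
   Context: $X_m$ is the space of covolume-one lattices in $\mathbb{R}^m$ (standard topology). $I$ is the standard basis of $\mathbb{Z}^m$; Cayley graph/digraph as usual with graph metric or directed path distance $d_{\mathcal{G}}$. $|\Lambda|$ is the index, $\bar\Lambda=|\Lambda|^{-1/m}\Lambda$. $\mathbf{B}=\{v:\sum|v_i|<1\}$ (undirected) or $\{v:v_i\ge0,\ \sum v_i<1\}$ (directed); $d_{\mathbb{R}^m}(x,y)=\inf\{t>0:y\in x+t\mathbf{B}\}$; $d_{\mathbb{R}^m/L}(x+L,y+L)=\inf_{v\in L}d_{\mathbb{R}^m}(x,y+v)$; $\lambda$ is Lebesgue measure. *)

theory Defs
  imports "HOL-Analysis.Analysis"
begin

definition lattice_of :: "real^'m^'m \<Rightarrow> (real^'m) set" where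
  "lattice_of A = {A *v (\<chi> i. real_of_int (z $ i)) | z :: int^'m. True}"

definition unimod :: "(real^'m^'m) set" where
  "unimod = {A. \<bar>det A\<bar> = 1}"

definition Xm :: "(real^'m) set set" where
  "Xm = lattice_of ` (unimod :: (real^'m^'m) set)"

definition Xm_top :: "(real^'m) set topology" where
  "Xm_top = topology (\<lambda>U. U \<subseteq> Xm \<and>
      openin (top_of_set (unimod :: (real^'m^'m) set)) {A \<in> unimod. lattice_of A \<in> U})"

definition subgroup_Zm :: "(int^'m) set \<Rightarrow> bool" where
  "subgroup_Zm H \<longleftrightarrow> 0 \<in> H \<and> (\<forall>a\<in>H. \<forall>b\<in>H. a + b \<in> H \<and> - a \<in> H)"

definition cosets_Zm :: "(int^'m) set \<Rightarrow> (int^'m) set set" where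
  "cosets_Zm H = range (\<lambda>x. (\<lambda>y. x + y) ` H)"

definition index_Zm :: "(int^'m) set \<Rightarrow> nat" where
  "index_Zm H = card (cosets_Zm H)"

definition finite_index_subgroup :: "(int^'m) set \<Rightarrow> bool" where
  "finite_index_subgroup H \<longleftrightarrow> subgroup_Zm H \<and> finite (cosets_Zm H)"

definition lattice_bar :: "(int^'m) set \<Rightarrow> (real^'m) set" where
  "lattice_bar H = (\<lambda>z. (real (index_Zm H) powr (- 1 / real CARD('m))) *\<^sub>R
                         (\<chi> i. real_of_int (z $ i))) ` H"

definition cayley_arc :: "(int^'m) set \<Rightarrow> (int^'m) set \<Rightarrow> bool" where
  "cayley_arc X Y \<longleftrightarrow> (\<exists>j. Y = (\<lambda>v. v + axis j 1) ` X)"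

definition cayley_adj :: "bool \<Rightarrow> (int^'m) set \<Rightarrow> (int^'m) set \<Rightarrow> bool" where
  "cayley_adj directed X Y \<longleftrightarrow>
     (if directed then cayley_arc X Y else cayley_arc X Y \<or> cayley_arc Y X)"

definition dist_G :: "bool \<Rightarrow> (int^'m) set \<Rightarrow> (int^'m) set \<Rightarrow> (int^'m) set \<Rightarrow> nat" where
  "dist_G directed H X Y = (LEAST n. \<exists>p. p 0 = X \<and> p n = Y \<and>
      (\<forall>i<n. p i \<in> cosets_Zm H \<and> p (Suc i) \<in> cosets_Zm H \<and> cayley_adj directed (p i) (p (Suc i))))"

definition xi_G :: "bool \<Rightarrow> real \<Rightarrow> (int^'m) set \<Rightarrow> real" where
  "xi_G directed \<alpha> H =
     ((1 / (real (card (cosets_Zm H)))\<^sup>2) *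
       (\<Sum>X\<in>cosets_Zm H. \<Sum>Y\<in>cosets_Zm H. real (dist_G directed H X Y) powr \<alpha>)) powr (1 / \<alpha>)"

definition Bset :: "bool \<Rightarrow> (real^'m) set" where
  "Bset directed = (if directed then {v. (\<forall>i. 0 \<le> v $ i) \<and> (\<Sum>i\<in>UNIV. v $ i) < 1}
                    else {v. (\<Sum>i\<in>UNIV. \<bar>v $ i\<bar>) < 1})"

definition dist_R :: "bool \<Rightarrow> real^'m \<Rightarrow> real^'m \<Rightarrow> ereal" where
  "dist_R directed x y = Inf {ereal t | t. t > 0 \<and> y \<in> (\<lambda>b. x + t *\<^sub>R b) ` Bset directed}"

definition dist_quot :: "bool \<Rightarrow> (real^'m) set \<Rightarrow> real^'m \<Rightarrow> real^'m \<Rightarrow> ereal" where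
  "dist_quot directed L x y = Inf {dist_R directed x (y + v) | v. v \<in> L}"

text \<open>A measurable fundamental domain for the lattice L (used to realize R^m / L with Lebesgue measure).\<close>
definition fundamental_domain :: "(real^'m) set \<Rightarrow> (real^'m) set \<Rightarrow> bool" where
  "fundamental_domain L F \<longleftrightarrow> F \<in> sets lebesgue \<and> (\<forall>x. \<exists>!v. v \<in> L \<and> x + v \<in> F)"

definition zeta_L :: "bool \<Rightarrow> real \<Rightarrow> (real^'m) set \<Rightarrow> real" where
  "zeta_L directed \<alpha> L =
     (let F = SOME F. fundamental_domain L F in
      ((1 / measure lebesgue F) *
        (LINT x:F|lebesgue. real_of_ereal (dist_quot directed L 0 x) powr \<alpha>)) powr (1 / \<alpha>))"

end

theory Submission
  imports Defs
begin

definition vr :: "int^'m \<Rightarrow> real^'m" where "vr z = (\<chi> i. real_of_int (z$i))"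

definition len :: "bool \<Rightarrow> real^'m \<Rightarrow> ereal" where
 "len d w = (if d then (if (\<forall>i. 0 \<le> w$i) then ereal (\<Sum>i\<in>UNIV. w$i) else \<infinity>)
             else ereal (\<Sum>i\<in>UNIV. \<bar>w$i\<bar>))"

lemma Inf_gt: "Inf {ereal t | t. s < t} = ereal s"
proof (rule antisym)
  show "ereal s \<le> Inf {ereal t | t. s < t}" by (rule Inf_greatest) auto
  show "Inf {ereal t | t. s < t} \<le> ereal s"
  proof (rule ereal_le_epsilon2)
    fix e :: real assume "0 < e"
    hence "Inf {ereal t | t. s < t} \<le> ereal (s + e)" by (intro Inf_lower) auto
    thus "Inf {ereal t | t. s < t} \<le> ereal s + ereal e" by simp
  qed
qed

lemma dist_R_len: "dist_R d x y = len d (y - x)"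
proof (cases d)
  case True
  show ?thesis
  proof (cases "\<forall>i. 0 \<le> (y - x)$i")
    case True
    define s where "s = (\<Sum>i\<in>UNIV. (y-x)$i)"
    have s0: "s \<ge> 0" unfolding s_def using True by (simp add: sum_nonneg)
    have "{ereal t | t. t > 0 \<and> y \<in> (\<lambda>b. x + t *\<^sub>R b) ` Bset d} = {ereal t | t. s < t}"
    proof (intro set_eqI iffI)
      fix z assume "z \<in> {ereal t | t. t > 0 \<and> y \<in> (\<lambda>b. x + t *\<^sub>R b) ` Bset d}"
      then obtain t b where z: "z = ereal t" "t > 0" "y = x + t *\<^sub>R b" "(\<forall>i. 0 \<le> b $ i) \<and> (\<Sum>i\<in>UNIV. b $ i) < 1"
        using \<open>d\<close> unfolding Bset_def by auto
      have "y - x = t *\<^sub>R b" using z by simp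
      hence "s = t * (\<Sum>i\<in>UNIV. b $ i)" unfolding s_def by (simp add: sum_distrib_left)
      also have "\<dots> < t" using z by simp
      finally show "z \<in> {ereal t | t. s < t}" using z by auto
    next
      fix z assume "z \<in> {ereal t | t. s < t}"
      then obtain t where z: "z = ereal t" "s < t" by auto
      define b where "b = (1/t) *\<^sub>R (y - x)"
      have t0: "t > 0" using s0 z by simp
      have "y = x + t *\<^sub>R b" using t0 by (simp add: b_def)
      moreover have "(\<forall>i. 0 \<le> b $ i) \<and> (\<Sum>i\<in>UNIV. b $ i) < 1"
        using True t0 z by (auto simp: b_def s_def sum_divide_distrib[symmetric] field_simps)
      ultimately show "z \<in> {ereal t | t. t > 0 \<and> y \<in> (\<lambda>b. x + t *\<^sub>R b) ` Bset d}"
        using \<open>d\<close> t0 z unfolding Bset_def by auto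
    qed
    thus ?thesis unfolding dist_R_def len_def using \<open>d\<close> True Inf_gt[of s] s_def by simp
  next
    case False
    have "{ereal t | t. t > 0 \<and> y \<in> (\<lambda>b. x + t *\<^sub>R b) ` Bset d} = {}"
    proof (rule ccontr)
      assume "{ereal t | t. t > 0 \<and> y \<in> (\<lambda>b. x + t *\<^sub>R b) ` Bset d} \<noteq> {}"
      then obtain t b where z: "t > 0" "y = x + t *\<^sub>R b" "(\<forall>i. 0 \<le> b $ i)"
        using \<open>d\<close> unfolding Bset_def by auto
      hence "\<forall>i. 0 \<le> (y - x)$i" by simp
      thus False using False by simp
    qed
    hence "dist_R d x y = Inf {}" unfolding dist_R_def by metis
    thus ?thesis unfolding len_def using \<open>d\<close> False by (simp add: top_ereal_def)
  qed
next
  case False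
  define s where "s = (\<Sum>i\<in>UNIV. \<bar>(y-x)$i\<bar>)"
  have s0: "s \<ge> 0" unfolding s_def by (simp add: sum_nonneg)
  have "{ereal t | t. t > 0 \<and> y \<in> (\<lambda>b. x + t *\<^sub>R b) ` Bset d} = {ereal t | t. s < t}"
  proof (intro set_eqI iffI)
    fix z assume "z \<in> {ereal t | t. t > 0 \<and> y \<in> (\<lambda>b. x + t *\<^sub>R b) ` Bset d}"
    then obtain t b where z: "z = ereal t" "t > 0" "y = x + t *\<^sub>R b" "(\<Sum>i\<in>UNIV. \<bar>b $ i\<bar>) < 1"
      using \<open>\<not>d\<close> unfolding Bset_def by auto
    have "y - x = t *\<^sub>R b" using z by simp
    hence "s = t * (\<Sum>i\<in>UNIV. \<bar>b $ i\<bar>)" unfolding s_def using z(2) by (simp add: sum_distrib_left abs_mult)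
    also have "\<dots> < t" using z by simp
    finally show "z \<in> {ereal t | t. s < t}" using z by auto
  next
    fix z assume "z \<in> {ereal t | t. s < t}"
    then obtain t where z: "z = ereal t" "s < t" by auto
    define b where "b = (1/t) *\<^sub>R (y - x)"
    have t0: "t > 0" using s0 z by simp
    have "y = x + t *\<^sub>R b" using t0 by (simp add: b_def)
    moreover have "(\<Sum>i\<in>UNIV. \<bar>b $ i\<bar>) < 1"
      using t0 z by (auto simp: b_def s_def abs_mult sum_divide_distrib[symmetric] field_simps)
    ultimately show "z \<in> {ereal t | t. t > 0 \<and> y \<in> (\<lambda>b. x + t *\<^sub>R b) ` Bset d}"
      using \<open>\<not>d\<close> t0 z unfolding Bset_def by auto
  qed
  thus ?thesis unfolding dist_R_def len_def using \<open>\<not>d\<close> Inf_gt[of s] s_def by simp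
qed

lemma len_nonneg: "0 \<le> len d w"
  unfolding len_def by (auto simp: sum_nonneg)

lemma len_add: "len d (a + b) \<le> len d a + len d b"
proof (cases d)
  case True
  show ?thesis
  proof (cases "(\<forall>i. 0 \<le> a$i) \<and> (\<forall>i. 0 \<le> b$i)")
    case True
    thus ?thesis using \<open>d\<close> unfolding len_def by (auto simp: sum.distrib add_nonneg_nonneg)
  next
    case False
    thus ?thesis using \<open>d\<close> unfolding len_def using sum_nonneg[of UNIV "\<lambda>i. a$i"] sum_nonneg[of UNIV "\<lambda>i. b$i"]
      by auto
  qed
next
  case False
  have "(\<Sum>i\<in>UNIV. \<bar>(a+b)$i\<bar>) \<le> (\<Sum>i\<in>UNIV. \<bar>a$i\<bar>) + (\<Sum>i\<in>UNIV. \<bar>b$i\<bar>)"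
    by (simp add: sum.distrib[symmetric] sum_mono abs_triangle_ineq)
  thus ?thesis using False unfolding len_def by simp
qed

lemma len_scale: assumes "c > 0" shows "len d (c *\<^sub>R w) = ereal c * len d w"
  using assms unfolding len_def
  by (auto simp: sum_distrib_left[symmetric] abs_mult zero_le_mult_iff)

lemma len_pos: assumes "\<forall>i. 0 \<le> w$i" shows "len d w = ereal (\<Sum>i\<in>UNIV. w$i)"
  using assms unfolding len_def by auto

definition grp :: "('a::ab_group_add) set \<Rightarrow> bool" where
  "grp L \<longleftrightarrow> 0 \<in> L \<and> (\<forall>a\<in>L. \<forall>b\<in>L. a + b \<in> L) \<and> (\<forall>a\<in>L. - a \<in> L)"

definition fq :: "bool \<Rightarrow> (real^'m) set \<Rightarrow> real^'m \<Rightarrow> ereal" where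
  "fq d L x = (INF v\<in>L. len d (x + v))"

lemma dist_quot_fq: "dist_quot d L 0 x = fq d L x"
proof -
  have "{dist_R d 0 (x + v) | v. v \<in> L} = (\<lambda>v. len d (x+v)) ` L"
    by (auto simp: dist_R_len)
  thus ?thesis unfolding dist_quot_def fq_def by simp
qed

lemma fq_nonneg: "0 \<le> fq d L x"
  unfolding fq_def by (rule INF_greatest) (simp add: len_nonneg)

lemma fq_le: "v \<in> L \<Longrightarrow> fq d L x \<le> len d (x + v)"
  unfolding fq_def by (rule INF_lower)

lemma fq_periodic:
  assumes "grp L" "u \<in> L" shows "fq d L (x + u) = fq d L x"
proof (rule antisym)
  show "fq d L (x + u) \<le> fq d L x"
    unfolding fq_def
  proof (rule INF_greatest)
    fix v assume "v \<in> L"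
    hence "-u + v \<in> L" using assms unfolding grp_def by blast
    hence "(INF v\<in>L. len d (x + u + v)) \<le> len d (x + u + (-u + v))" by (rule INF_lower)
    thus "(INF v\<in>L. len d (x + u + v)) \<le> len d (x + v)" by (simp add: algebra_simps)
  qed
  show "fq d L x \<le> fq d L (x + u)"
    unfolding fq_def
  proof (rule INF_greatest)
    fix v assume "v \<in> L"
    hence "u + v \<in> L" using assms unfolding grp_def by auto
    hence "(INF v\<in>L. len d (x + v)) \<le> len d (x + (u + v))" by (rule INF_lower)
    thus "(INF v\<in>L. len d (x + v)) \<le> len d (x + u + v)" by (simp add: algebra_simps)
  qed
qed

lemma fq_tri:
  assumes "L \<noteq> {}" shows "fq d L y \<le> fq d L x + len d (y - x)"
proof (cases "len d (y - x) = \<infinity>")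
  case True thus ?thesis using fq_nonneg[of d L x] by simp
next
  case False
  have c: "len d (y - x) \<noteq> -\<infinity>" using len_nonneg[of d "y-x"] by auto
  have "fq d L y \<le> (INF v\<in>L. len d (x + v) + len d (y - x))"
    unfolding fq_def
  proof (rule INF_mono)
    fix v assume "v \<in> L"
    have "len d (y + v) = len d ((x + v) + (y - x))" by (simp add: algebra_simps)
    also have "\<dots> \<le> len d (x + v) + len d (y - x)" by (rule len_add)
    finally show "\<exists>v'\<in>L. len d (y + v') \<le> len d (x + v) + len d (y - x)" using \<open>v\<in>L\<close> by blast
  qed
  also have "\<dots> = fq d L x + len d (y - x)"
    unfolding fq_def by (rule INF_ereal_add_left[OF assms c]) (simp add: len_nonneg)
  finally show ?thesis .
qed

lemma lebesgue_translate_eq: "(lebesgue :: (real^'m) measure) = distr lebesgue lebesgue (\<lambda>x. t + x)"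
proof -
  have T: "(\<lambda>x::real^'m. t + (\<Sum>j\<in>Basis. ((\<lambda>_. 1::real) j * (x \<bullet> j)) *\<^sub>R j)) = (\<lambda>x. t + x)"
    by (simp add: euclidean_representation)
  have "(lebesgue :: (real^'m) measure) = density (distr lebesgue lebesgue (\<lambda>x. t + x)) (\<lambda>_. (\<Prod>j\<in>(Basis::(real^'m) set). \<bar>(\<lambda>_. 1::real) j\<bar>))"
    using lebesgue_affine_euclidean[of "\<lambda>_. 1::real" t] T by simp
  thus ?thesis by (simp add: density_1)
qed

lemma lebesgue_translate_meas: "(\<lambda>x::real^'m. t + x) \<in> lebesgue \<rightarrow>\<^sub>M lebesgue"
proof -
  have T: "(\<lambda>x::real^'m. t + (\<Sum>j\<in>Basis. ((\<lambda>_. 1::real) j * (x \<bullet> j)) *\<^sub>R j)) = (\<lambda>x. t + x)"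
    by (simp add: euclidean_representation)
  show ?thesis using lebesgue_affine_measurable[of "\<lambda>_. 1::real" t] T by simp
qed

lemma lebesgue_translate_meas2: "(\<lambda>x::real^'m. x + t) \<in> lebesgue \<rightarrow>\<^sub>M lebesgue"
  using lebesgue_translate_meas[of t] by (simp add: add.commute)

lemma nn_integral_translate:
  fixes G :: "real^'m \<Rightarrow> ennreal"
  assumes "G \<in> borel_measurable lebesgue"
  shows "(\<integral>\<^sup>+x. G x \<partial>lebesgue) = (\<integral>\<^sup>+x. G (t + x) \<partial>lebesgue)"
proof -
  have "(\<integral>\<^sup>+x. G x \<partial>lebesgue) = (\<integral>\<^sup>+x. G x \<partial>distr lebesgue lebesgue (\<lambda>x. t + x))"
    using lebesgue_translate_eq[of t] by simp
  also have "\<dots> = (\<integral>\<^sup>+x. G (t + x) \<partial>lebesgue)"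
    by (subst nn_integral_distr[OF lebesgue_translate_meas]) (use assms in auto)
  finally show ?thesis .
qed

lemma meas_translate:
  fixes G :: "real^'m \<Rightarrow> 'b::topological_space"
  assumes "G \<in> borel_measurable lebesgue"
  shows "(\<lambda>x. G (t + x)) \<in> borel_measurable lebesgue"
  using measurable_comp[OF lebesgue_translate_meas assms] by (simp add: o_def)

lemma len_meas[measurable]: "len d \<in> borel_measurable borel"
  unfolding len_def by measurable

lemma fq_meas:
  assumes "countable L" shows "fq d L \<in> borel_measurable lebesgue"
proof -
  have "(\<lambda>x. INF v\<in>L. len d (x + v)) \<in> borel_measurable borel"
    using assms by measurable
  hence "fq d L \<in> borel_measurable borel" unfolding fq_def .
  hence "fq d L \<in> borel_measurable lborel" by simp
  thus ?thesis by (rule measurable_completion)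
qed

definition fundom :: "(real^'m) set \<Rightarrow> (real^'m) set \<Rightarrow> bool" where
  "fundom L F \<longleftrightarrow> F \<in> sets lebesgue \<and> (\<forall>x. \<exists>!v. v \<in> L \<and> x + v \<in> F)"

lemma sum_single_ind:
  fixes e :: "nat \<Rightarrow> real^'m"
  assumes "bij_betw e UNIV L" "grp L" "fundom L F"
  shows "(\<Sum>k. indicator F (x + e k) :: ennreal) = 1"
proof -
  obtain v where v: "v \<in> L" "x + v \<in> F" and uq: "\<And>w. w \<in> L \<Longrightarrow> x + w \<in> F \<Longrightarrow> w = v"
    using assms(3) unfolding fundom_def by metis
  obtain k0 where k0: "e k0 = v" using assms(1) v(1) by (metis bij_betw_inv_into_right)
  have "(\<Sum>k. indicator F (x + e k) :: ennreal) = (\<Sum>k\<in>{k0}. indicator F (x + e k))"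
  proof (rule suminf_finite)
    fix k assume "k \<notin> {k0}"
    hence "e k \<noteq> e k0" using assms(1) by (metis UNIV_I bij_betw_imp_inj_on inj_on_def singletonI)
    moreover have "e k \<in> L" using assms(1) by (metis UNIV_I bij_betw_apply)
    ultimately show "indicator F (x + e k) = (0::ennreal)" using uq k0 by (auto simp: indicator_def)
  qed simp
  also have "\<dots> = 1" using k0 v by simp
  finally show ?thesis .
qed

lemma transfer:
  fixes g :: "real^'m \<Rightarrow> ennreal"
  assumes L: "countable L" "infinite L" "grp L" and F1: "fundom L F1" and F2: "fundom L F2"
    and g: "g \<in> borel_measurable lebesgue" and per: "\<And>x v. v \<in> L \<Longrightarrow> g (x + v) = g x"
  shows "(\<integral>\<^sup>+x. g x * indicator F1 x \<partial>lebesgue) = (\<integral>\<^sup>+x. g x * indicator F2 x \<partial>lebesgue)"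
proof -
  define e where "e = from_nat_into L"
  have e: "bij_betw e UNIV L" unfolding e_def using L by (simp add: bij_betw_from_nat_into)
  have eL: "e k \<in> L" for k using e by (metis UNIV_I bij_betw_apply)
  have grpL: "0 \<in> L" "\<And>a b. a\<in>L \<Longrightarrow> b\<in>L \<Longrightarrow> a+b \<in> L" "\<And>a. a\<in>L \<Longrightarrow> -a \<in> L"
    using L(3) unfolding grp_def by auto
  have F1m[measurable]: "F1 \<in> sets lebesgue" and F2m[measurable]: "F2 \<in> sets lebesgue"
    using F1 F2 unfolding fundom_def by auto
  have e': "bij_betw (\<lambda>k. - e k) UNIV L"
  proof -
    have "bij_betw uminus L L" by (rule bij_betwI[of _ _ _ uminus]) (auto simp: grpL(3))
    from bij_betw_trans[OF e this] show ?thesis by (simp add: o_def)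
  qed
  have ind_meas: "(\<lambda>x. indicator A (t + x) :: ennreal) \<in> borel_measurable lebesgue" if "A \<in> sets lebesgue" for A :: "(real^'m) set" and t
    by (rule meas_translate[OF borel_measurable_indicator[OF that]])
  have gt: "(\<lambda>x. g (t + x)) \<in> borel_measurable lebesgue" for t by (rule meas_translate[OF g])
  have "(\<integral>\<^sup>+x. g x * indicator F1 x \<partial>lebesgue)
      = (\<integral>\<^sup>+x. (\<Sum>k. g x * indicator F1 x * indicator F2 (x + e k)) \<partial>lebesgue)"
    by (simp add: ennreal_suminf_cmult sum_single_ind[OF e L(3) F2])
  also have "\<dots> = (\<Sum>k. \<integral>\<^sup>+x. g x * indicator F1 x * indicator F2 (x + e k) \<partial>lebesgue)"
    by (rule nn_integral_suminf) (use g ind_meas[OF F2m] lebesgue_translate_meas2 lebesgue_translate_meas in measurable)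
  also have "\<dots> = (\<Sum>k. \<integral>\<^sup>+x. g x * indicator F2 x * indicator F1 (x + - e k) \<partial>lebesgue)"
  proof (rule suminf_cong)
    fix k
    have "(\<integral>\<^sup>+x. g x * indicator F1 x * indicator F2 (x + e k) \<partial>lebesgue)
       = (\<integral>\<^sup>+x. g (- e k + x) * indicator F1 (- e k + x) * indicator F2 (- e k + x + e k) \<partial>lebesgue)"
      by (rule nn_integral_translate) (use g ind_meas[OF F2m] lebesgue_translate_meas2 lebesgue_translate_meas in measurable)
    also have "\<dots> = (\<integral>\<^sup>+x. g x * indicator F2 x * indicator F1 (x + - e k) \<partial>lebesgue)"
      using per[OF grpL(3)[OF eL[of k]]] by (simp add: add.commute mult_ac)
    finally show "(\<integral>\<^sup>+x. g x * indicator F1 x * indicator F2 (x + e k) \<partial>lebesgue)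
       = (\<integral>\<^sup>+x. g x * indicator F2 x * indicator F1 (x + - e k) \<partial>lebesgue)" .
  qed
  also have "\<dots> = (\<integral>\<^sup>+x. (\<Sum>k. g x * indicator F2 x * indicator F1 (x + - e k)) \<partial>lebesgue)"
    by (rule nn_integral_suminf[symmetric]) (use g ind_meas[OF F1m] lebesgue_translate_meas2 lebesgue_translate_meas in measurable)
  also have "\<dots> = (\<integral>\<^sup>+x. g x * indicator F2 x \<partial>lebesgue)"
  proof -
    have "(\<Sum>k. indicator F1 (x - e k) :: ennreal) = 1" for x
      using sum_single_ind[OF e' L(3) F1, of x] by simp
    thus ?thesis by (simp add: ennreal_suminf_cmult)
  qed
  finally show ?thesis .
qed

lemma vr_add[simp]: "vr (a + b) = vr a + vr b" and vr_minus[simp]: "vr (- a) = - vr a"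
  and vr_diff[simp]: "vr (a - b) = vr a - vr b" and vr_zero[simp]: "vr 0 = 0"
  by (auto simp: vr_def vec_eq_iff)

lemma vr_inj: "vr a = vr b \<longleftrightarrow> a = b"
  by (auto simp: vr_def vec_eq_iff)

lemma vr_nth[simp]: "vr z $ i = real_of_int (z $ i)"
  by (simp add: vr_def)

lemma subgroup_grp: "subgroup_Zm H \<Longrightarrow> grp H"
  unfolding subgroup_Zm_def grp_def by auto

lemma grpD: assumes "grp H" shows "0 \<in> H" "a \<in> H \<Longrightarrow> b \<in> H \<Longrightarrow> a + b \<in> H" "a \<in> H \<Longrightarrow> - a \<in> H"
  "a \<in> H \<Longrightarrow> b \<in> H \<Longrightarrow> a - b \<in> H"
  using assms unfolding grp_def by (auto, metis diff_conv_add_uminus)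

lemma mem_coset: assumes "grp (H::('a::ab_group_add) set)" shows "b \<in> (+) a ` H \<longleftrightarrow> b - a \<in> H"
  by (auto simp: image_iff) (metis add_diff_cancel_left' diff_add_cancel add.commute)

lemma coset_self: assumes "grp H" shows "a \<in> (+) a ` H"
  using grpD(1)[OF assms] by force

lemma coset_eq: assumes "grp (H::('a::ab_group_add) set)" shows "((+) a ` H = (+) b ` H) \<longleftrightarrow> a - b \<in> H"
proof
  assume "(+) a ` H = (+) b ` H"
  hence "a \<in> (+) b ` H" using coset_self[OF assms, of a] by simp
  thus "a - b \<in> H" using mem_coset[OF assms] by simp
next
  assume ab: "a - b \<in> H"
  show "(+) a ` H = (+) b ` H"
  proof (intro set_eqI)
    fix x
    have "x - a \<in> H \<longleftrightarrow> x - b \<in> H"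
    proof
      assume "x - a \<in> H" thus "x - b \<in> H" using grpD(2)[OF assms _ ab] by (metis diff_add_cancel add_diff_eq diff_diff_eq2)
    next
      assume "x - b \<in> H" thus "x - a \<in> H" using grpD(4)[OF assms _ ab] by (metis diff_diff_eq2 diff_add_cancel add_diff_eq)
    qed
    thus "x \<in> (+) a ` H \<longleftrightarrow> x \<in> (+) b ` H" using mem_coset[OF assms] by simp
  qed
qed

definition rep :: "'a set \<Rightarrow> 'a" where "rep Y = (SOME a. a \<in> Y)"

lemma rep_coset: assumes "grp H" "Y \<in> cosets_Zm H" shows "rep Y \<in> Y" "Y = (+) (rep Y) ` H"
proof -
  obtain a where a: "Y = (+) a ` H" using assms(2) unfolding cosets_Zm_def by auto
  hence "a \<in> Y" using coset_self[OF assms(1)] by simp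
  thus r: "rep Y \<in> Y" unfolding rep_def by (rule someI)
  hence "rep Y - a \<in> H" using a mem_coset[OF assms(1)] by simp
  hence "a - rep Y \<in> H" using grpD(3)[OF assms(1)] by (metis minus_diff_eq)
  thus "Y = (+) (rep Y) ` H" using a coset_eq[OF assms(1)] by simp
qed

lemma coset_in: "(+) a ` H \<in> cosets_Zm H"
  unfolding cosets_Zm_def by auto

lemma infinite_H: assumes "finite_index_subgroup (H :: (int^'m) set)" shows "infinite H"
proof
  assume fH: "finite H"
  have "(UNIV :: (int^'m) set) \<subseteq> \<Union> (cosets_Zm H)"
    using coset_self[OF subgroup_grp] assms unfolding finite_index_subgroup_def cosets_Zm_def by blast
  moreover have "finite (\<Union> (cosets_Zm H))"
    using assms fH unfolding finite_index_subgroup_def cosets_Zm_def by auto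
  ultimately have "finite (UNIV :: (int^'m) set)" by (rule finite_subset)
  thus False using infinite_UNIV_vec[where 'a=int and 'b='m] by simp
qed

definition tile :: "bool \<Rightarrow> real \<Rightarrow> (real^'m) set" where
  "tile s h = {y. \<forall>i. if s then 0 \<le> y$i \<and> y$i < h else -h < y$i \<and> y$i \<le> 0}"

lemma grid_ex: assumes "h > 0" shows "\<exists>z. y - h *\<^sub>R vr z \<in> tile s h"
proof (cases s)
  case True
  define z where "z = (\<chi> i. \<lfloor>y$i / h\<rfloor>)"
  have "\<forall>i. 0 \<le> y$i - h * \<lfloor>y$i / h\<rfloor> \<and> y$i - h * \<lfloor>y$i / h\<rfloor> < h"
  proof
    fix i
    have a: "real_of_int \<lfloor>y$i / h\<rfloor> \<le> y$i/h" "y$i/h < real_of_int \<lfloor>y$i / h\<rfloor> + 1" by linarith+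
    from mult_left_mono[OF a(1), of h] have "h * \<lfloor>y$i / h\<rfloor> \<le> y$i" using assms by simp
    moreover from mult_strict_left_mono[OF a(2), of h] have "y$i < h * \<lfloor>y$i / h\<rfloor> + h" using assms by (simp add: algebra_simps)
    ultimately show "0 \<le> y$i - h * \<lfloor>y$i / h\<rfloor> \<and> y$i - h * \<lfloor>y$i / h\<rfloor> < h" by simp
  qed
  thus ?thesis using True by (intro exI[of _ z]) (simp add: tile_def z_def)
next
  case False
  define z where "z = (\<chi> i. \<lceil>y$i / h\<rceil>)"
  have "\<forall>i. - h < y$i - h * \<lceil>y$i / h\<rceil> \<and> y$i - h * \<lceil>y$i / h\<rceil> \<le> 0"
  proof
    fix i
    have a: "y$i/h \<le> real_of_int \<lceil>y$i / h\<rceil>" "real_of_int \<lceil>y$i / h\<rceil> < y$i/h + 1" by linarith+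
    from mult_left_mono[OF a(1), of h] have "y$i \<le> h * \<lceil>y$i / h\<rceil>" using assms by simp
    moreover from mult_strict_left_mono[OF a(2), of h] have "h * \<lceil>y$i / h\<rceil> < y$i + h" using assms by (simp add: algebra_simps)
    ultimately show "- h < y$i - h * \<lceil>y$i / h\<rceil> \<and> y$i - h * \<lceil>y$i / h\<rceil> \<le> 0" by simp
  qed
  thus ?thesis using False by (intro exI[of _ z]) (simp add: tile_def z_def)
qed

lemma grid_uniq: assumes "h > 0" "y - h *\<^sub>R vr z1 \<in> tile s h" "y - h *\<^sub>R vr z2 \<in> tile s h"
  shows "z1 = z2"
proof -
  have "z1 $ i = z2 $ i" for i
  proof -
    have c1: "if s then 0 \<le> y$i - h * z1$i \<and> y$i - h * z1$i < h else -h < y$i - h * z1$i \<and> y$i - h * z1$i \<le> 0"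
      using assms(2) unfolding tile_def by auto
    have c2: "if s then 0 \<le> y$i - h * z2$i \<and> y$i - h * z2$i < h else -h < y$i - h * z2$i \<and> y$i - h * z2$i \<le> 0"
      using assms(3) unfolding tile_def by auto
    have "\<bar>h * (z1$i - z2$i)\<bar> < h" using c1 c2
      by (cases s) (auto simp: abs_less_iff algebra_simps)
    hence "\<bar>real_of_int (z1$i - z2$i)\<bar> < 1" using assms(1) by (simp add: abs_mult)
    thus ?thesis by linarith
  qed
  thus ?thesis by (simp add: vec_eq_iff)
qed

lemma tile_borel: "tile s h \<in> sets borel"
  unfolding tile_def by measurable

lemma tile_leb: "tile s h \<in> sets lebesgue"
proof -
  have "tile s h \<in> sets lborel" by (simp add: tile_borel)
  thus ?thesis by (rule sets_completionI_sets)
qed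

lemma tile_emeasure: assumes "h > 0"
  shows "0 < emeasure lebesgue (tile s h :: (real^'m) set)" "emeasure lebesgue (tile s h :: (real^'m) set) < \<infinity>"
proof -
  define lo :: "real^'m" where "lo = vec (if s then 0 else -h)"
  define hi :: "real^'m" where "hi = vec (if s then h else 0)"
  have sub1: "box lo hi \<subseteq> tile s h" unfolding lo_def hi_def tile_def by (auto simp: mem_box_cart) (metis less_imp_le)+
  have eqm: "emeasure lebesgue (tile s h :: (real^'m) set) = emeasure lborel (tile s h :: (real^'m) set)"
  proof -
    have "(tile s h :: (real^'m) set) \<in> sets lborel" by (simp add: tile_borel)
    thus ?thesis by simp
  qed
  have sub2: "(tile s h :: (real^'m) set) \<subseteq> cbox (vec (-h)) (vec h)"
  proof
    fix x :: "real^'m" assume x: "x \<in> tile s h"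
    have "-h \<le> x$i \<and> x$i \<le> h" for i
    proof -
      have "if s then 0 \<le> x$i \<and> x$i < h else -h < x$i \<and> x$i \<le> 0" using x unfolding tile_def by auto
      thus ?thesis using assms by (cases s) auto
    qed
    thus "x \<in> cbox (vec (-h)) (vec h)" by (auto simp: mem_box_cart)
  qed
  have "emeasure lborel (box lo hi) = (\<Prod>b\<in>Basis. (hi - lo) \<bullet> b)" 
    using assms by (intro emeasure_lborel_box) (auto simp: lo_def hi_def Basis_vec_def inner_axis)
  also have "\<dots> > 0"
    using assms by (auto simp: lo_def hi_def Basis_vec_def inner_axis intro!: prod_pos)
  finally have "0 < emeasure lborel (box lo hi)" .
  also have "\<dots> \<le> emeasure lborel (tile s h :: (real^'m) set)" by (rule emeasure_mono[OF sub1]) (simp add: tile_borel)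
  finally show "0 < emeasure lebesgue (tile s h :: (real^'m) set)"
    using eqm by simp
  have "bounded (tile s h :: (real^'m) set)" using sub2 bounded_cbox bounded_subset by blast
  thus "emeasure lebesgue (tile s h :: (real^'m) set) < \<infinity>" 
    using emeasure_bounded_finite eqm by simp
qed

definition hh :: "(int^'m) set \<Rightarrow> real" where
  "hh H = real (index_Zm H) powr (- 1 / real CARD('m))"

definition FC :: "bool \<Rightarrow> (int^'m) set \<Rightarrow> (real^'m) set" where
  "FC s H = (\<Union>Y\<in>cosets_Zm H. (+) (hh H *\<^sub>R vr (rep Y)) ` tile s (hh H))"

locale fis =
  fixes H :: "(int^'m) set"
  assumes FI: "finite_index_subgroup H"
begin

lemma gH: "grp H" using FI subgroup_grp unfolding finite_index_subgroup_def by auto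

lemma fin_cos: "finite (cosets_Zm H)" using FI unfolding finite_index_subgroup_def by auto

lemma N_pos: "index_Zm H > 0"
proof -
  have "(+) 0 ` H \<in> cosets_Zm H" by (rule coset_in)
  thus ?thesis unfolding index_Zm_def using fin_cos card_gt_0_iff by blast
qed

lemma hh_pos: "hh H > 0" unfolding hh_def using N_pos by simp

lemma hh_le1: "hh H \<le> 1"
proof -
  have "real (index_Zm H) \<ge> 1" using N_pos by simp
  hence "real (index_Zm H) powr (- 1 / real CARD('m)) \<le> real (index_Zm H) powr 0"
    by (intro powr_mono) auto
  thus ?thesis unfolding hh_def using N_pos by simp
qed

lemma Lbar: "lattice_bar H = (\<lambda>z. hh H *\<^sub>R vr z) ` H"
  unfolding lattice_bar_def hh_def vr_def by simp

lemma L_mem: "hh H *\<^sub>R vr z \<in> lattice_bar H \<longleftrightarrow> z \<in> H"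
proof -
  have "hh H *\<^sub>R vr z = hh H *\<^sub>R vr z' \<longleftrightarrow> z = z'" for z' using hh_pos vr_inj by auto
  thus ?thesis unfolding Lbar by auto
qed

lemma grpL: "grp (lattice_bar H)"
  unfolding grp_def Lbar
proof (intro conjI ballI)
  show "0 \<in> (\<lambda>z. hh H *\<^sub>R vr z) ` H" using grpD(1)[OF gH] by (intro image_eqI[of _ _ 0]) auto
next
  fix x y assume "x \<in> (\<lambda>z. hh H *\<^sub>R vr z) ` H" "y \<in> (\<lambda>z. hh H *\<^sub>R vr z) ` H"
  then obtain a b where ab: "a \<in> H" "b \<in> H" "x = hh H *\<^sub>R vr a" "y = hh H *\<^sub>R vr b" by auto
  show "x + y \<in> (\<lambda>z. hh H *\<^sub>R vr z) ` H"
    using ab grpD(2)[OF gH ab(1,2)] by (intro image_eqI[of _ _ "a + b"]) (auto simp: scaleR_add_right)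
next
  fix x assume "x \<in> (\<lambda>z. hh H *\<^sub>R vr z) ` H"
  then obtain a where a: "a \<in> H" "x = hh H *\<^sub>R vr a" by auto
  show "- x \<in> (\<lambda>z. hh H *\<^sub>R vr z) ` H"
    using a grpD(3)[OF gH a(1)] by (intro image_eqI[of _ _ "- a"]) auto
qed

lemma countL: "countable (lattice_bar H)"
  unfolding Lbar by (rule countable_image) simp

lemma infL: "infinite (lattice_bar H)"
proof -
  have "inj_on (\<lambda>z. hh H *\<^sub>R vr z) H" using hh_pos vr_inj by (auto simp: inj_on_def)
  thus ?thesis unfolding Lbar using infinite_H[OF FI] finite_imageD by blast
qed

lemma rep_in: "Y \<in> cosets_Zm H \<Longrightarrow> rep Y \<in> Y" and rep_eq: "Y \<in> cosets_Zm H \<Longrightarrow> Y = (+) (rep Y) ` H"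
  using rep_coset[OF gH] by auto

lemma coset_of: "z \<in> Y \<Longrightarrow> Y \<in> cosets_Zm H \<Longrightarrow> z - rep Y \<in> H"
  using rep_eq mem_coset[OF gH] by metis

lemma rep_uniq: assumes "Y1 \<in> cosets_Zm H" "Y2 \<in> cosets_Zm H" "rep Y1 - rep Y2 \<in> H" shows "Y1 = Y2"
  using assms rep_eq coset_eq[OF gH] by metis

lemma tile_decomp_uniq:
  assumes "Y1 \<in> cosets_Zm H" "Y2 \<in> cosets_Zm H" "u1 \<in> H" "u2 \<in> H"
    and "y - hh H *\<^sub>R vr (rep Y1 - u1) \<in> tile s (hh H)" "y - hh H *\<^sub>R vr (rep Y2 - u2) \<in> tile s (hh H)"
  shows "Y1 = Y2 \<and> u1 = u2"
proof -
  have e: "rep Y1 - u1 = rep Y2 - u2" using grid_uniq[OF hh_pos assms(5,6)] .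
  hence "rep Y1 - rep Y2 = u1 - u2" by (simp add: algebra_simps)
  hence "rep Y1 - rep Y2 \<in> H" using grpD(4)[OF gH assms(3,4)] by simp
  hence "Y1 = Y2" by (rule rep_uniq[OF assms(1,2)])
  thus ?thesis using e by simp
qed

lemma FC_meas: "FC s H \<in> sets lebesgue"
proof -
  have "tile s (hh H) \<in> sets lebesgue" by (rule tile_leb)
  hence "(+) (hh H *\<^sub>R vr (rep Y)) ` tile s (hh H) \<in> sets lebesgue" for Y
    by (rule lebesgue_sets_translation)
  thus ?thesis unfolding FC_def using fin_cos by blast
qed

lemma FC_fundom: "fundom (lattice_bar H) (FC s H)"
  unfolding fundom_def
proof (intro conjI allI FC_meas)
  fix y :: "real^'m"
  obtain z where z: "y - hh H *\<^sub>R vr z \<in> tile s (hh H)" using grid_ex[OF hh_pos] by blast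
  define Y where "Y = (+) z ` H"
  have Y: "Y \<in> cosets_Zm H" unfolding Y_def by (rule coset_in)
  have u: "z - rep Y \<in> H" using coset_of[OF _ Y] coset_self[OF gH] Y_def by blast
  define v where "v = hh H *\<^sub>R vr (- (z - rep Y))"
  have vL: "v \<in> lattice_bar H" unfolding v_def L_mem using grpD(3)[OF gH u] .
  have "y + v = hh H *\<^sub>R vr (rep Y) + (y - hh H *\<^sub>R vr z)"
    unfolding v_def by (simp add: algebra_simps)
  hence "y + v \<in> FC s H" unfolding FC_def using Y z by blast
  moreover have "w = v" if w: "w \<in> lattice_bar H" "y + w \<in> FC s H" for w
  proof -
    obtain u2 where u2: "u2 \<in> H" "w = hh H *\<^sub>R vr u2" using w(1) unfolding Lbar by auto
    obtain Y2 c where Y2: "Y2 \<in> cosets_Zm H" "c \<in> tile s (hh H)" "y + w = hh H *\<^sub>R vr (rep Y2) + c"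
      using w(2) unfolding FC_def by auto
    have t2: "y - hh H *\<^sub>R vr (rep Y2 - u2) \<in> tile s (hh H)"
      using Y2 u2 by (simp add: algebra_simps scaleR_diff_right)
    have t1: "y - hh H *\<^sub>R vr (rep Y - (- (z - rep Y))) \<in> tile s (hh H)" using z by simp
    have "Y = Y2 \<and> - (z - rep Y) = u2"
      using tile_decomp_uniq[OF Y Y2(1) grpD(3)[OF gH u] u2(1) t1 t2] .
    hence "u2 = - (z - rep Y)" by (metis minus_diff_eq)
    thus ?thesis using u2 v_def by simp
  qed
  ultimately show "\<exists>!v. v \<in> lattice_bar H \<and> y + v \<in> FC s H" using vL by blast
qed

lemma FC_disj: "disjoint_family_on (\<lambda>Y. (+) (hh H *\<^sub>R vr (rep Y)) ` tile s (hh H)) (cosets_Zm H)"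
  unfolding disjoint_family_on_def
proof (intro ballI impI)
  fix Y1 Y2 assume Y: "Y1 \<in> cosets_Zm H" "Y2 \<in> cosets_Zm H" "Y1 \<noteq> Y2"
  show "(+) (hh H *\<^sub>R vr (rep Y1)) ` tile s (hh H) \<inter> (+) (hh H *\<^sub>R vr (rep Y2)) ` tile s (hh H) = {}"
  proof (rule ccontr)
    assume "\<not> ?thesis"
    then obtain y where y: "y \<in> (+) (hh H *\<^sub>R vr (rep Y1)) ` tile s (hh H)" "y \<in> (+) (hh H *\<^sub>R vr (rep Y2)) ` tile s (hh H)"
      by blast
    obtain x1 where x1: "x1 \<in> tile s (hh H)" "y = hh H *\<^sub>R vr (rep Y1) + x1" using y(1) by auto
    obtain x2 where x2: "x2 \<in> tile s (hh H)" "y = hh H *\<^sub>R vr (rep Y2) + x2" using y(2) by auto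
    have "y - hh H *\<^sub>R vr (rep Y1 - 0) \<in> tile s (hh H)" "y - hh H *\<^sub>R vr (rep Y2 - 0) \<in> tile s (hh H)"
    proof -
      have "y - hh H *\<^sub>R vr (rep Y1 - 0) = x1" using x1(2) by simp
      moreover have "y - hh H *\<^sub>R vr (rep Y2 - 0) = x2" using x2(2) by simp
      ultimately show "y - hh H *\<^sub>R vr (rep Y1 - 0) \<in> tile s (hh H)" "y - hh H *\<^sub>R vr (rep Y2 - 0) \<in> tile s (hh H)"
        using x1 x2 by simp_all
    qed
    thus False using tile_decomp_uniq[OF Y(1,2) grpD(1)[OF gH] grpD(1)[OF gH]] Y(3) by blast
  qed
qed

lemma int_FC:
  fixes g :: "real^'m \<Rightarrow> ennreal"
  assumes g: "g \<in> borel_measurable lebesgue"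
  shows "(\<integral>\<^sup>+x. g x * indicator (FC s H) x \<partial>lebesgue)
       = (\<Sum>Y\<in>cosets_Zm H. \<integral>\<^sup>+x. g (hh H *\<^sub>R vr (rep Y) + x) * indicator (tile s (hh H)) x \<partial>lebesgue)"
proof -
  let ?T = "\<lambda>Y. (+) (hh H *\<^sub>R vr (rep Y)) ` tile s (hh H)"
  have Tm: "?T Y \<in> sets lebesgue" for Y
    by (rule lebesgue_sets_translation) (rule tile_leb)
  have "(\<integral>\<^sup>+x. g x * indicator (FC s H) x \<partial>lebesgue) = (\<integral>\<^sup>+x. (\<Sum>Y\<in>cosets_Zm H. g x * indicator (?T Y) x) \<partial>lebesgue)"
    unfolding FC_def by (simp add: indicator_UN_disjoint[OF fin_cos FC_disj] sum_distrib_left)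
  also have "\<dots> = (\<Sum>Y\<in>cosets_Zm H. \<integral>\<^sup>+x. g x * indicator (?T Y) x \<partial>lebesgue)"
    by (rule nn_integral_sum) (use g Tm in measurable)
  also have "\<dots> = (\<Sum>Y\<in>cosets_Zm H. \<integral>\<^sup>+x. g (hh H *\<^sub>R vr (rep Y) + x) * indicator (tile s (hh H)) x \<partial>lebesgue)"
  proof (rule sum.cong[OF refl])
    fix Y
    have "(\<integral>\<^sup>+x. g x * indicator (?T Y) x \<partial>lebesgue)
       = (\<integral>\<^sup>+x. g (hh H *\<^sub>R vr (rep Y) + x) * indicator (?T Y) (hh H *\<^sub>R vr (rep Y) + x) \<partial>lebesgue)"
      by (rule nn_integral_translate) (use g Tm in measurable)
    also have "\<dots> = (\<integral>\<^sup>+x. g (hh H *\<^sub>R vr (rep Y) + x) * indicator (tile s (hh H)) x \<partial>lebesgue)"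
      by (rule nn_integral_cong) (simp add: indicator_def image_iff)
    finally show "(\<integral>\<^sup>+x. g x * indicator (?T Y) x \<partial>lebesgue) = (\<integral>\<^sup>+x. g (hh H *\<^sub>R vr (rep Y) + x) * indicator (tile s (hh H)) x \<partial>lebesgue)" .
  qed
  finally show ?thesis .
qed

definition walk :: "bool \<Rightarrow> nat \<Rightarrow> (int^'m) set \<Rightarrow> (int^'m) set \<Rightarrow> bool" where
  "walk d k X Y \<longleftrightarrow> (\<exists>p. p 0 = X \<and> p k = Y \<and>
      (\<forall>i<k. p i \<in> cosets_Zm H \<and> p (Suc i) \<in> cosets_Zm H \<and> cayley_adj d (p i) (p (Suc i))))"

lemma dist_G_walk: "dist_G d H X Y = (LEAST n. walk d n X Y)"
  unfolding dist_G_def walk_def ..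

end

lemma shift_coset: "(\<lambda>v. v + c) ` ((+) a ` H) = (+) (a + c) ` (H :: ('a::ab_group_add) set)"
  by (auto simp: image_iff algebra_simps)

lemma vr_axis: "vr (axis j 1) = axis j 1"
  by (simp add: vr_def axis_def vec_eq_iff)

lemma sum_axis1: "(\<Sum>i\<in>UNIV. (axis j (1::real)) $ i) = 1"
  by (simp add: axis_def)

lemma len_axis: "len d (axis j 1) = 1"
  unfolding len_def by (auto simp: sum_axis1 axis_def one_ereal_def)

lemma len_maxis: "len False (- axis j 1) = 1"
  unfolding len_def by (auto simp: axis_def one_ereal_def)

lemma len_int_finite:
  assumes "len d (vr z) \<noteq> \<infinity>" shows "\<exists>k::nat. len d (vr z) = ereal (real k)"
proof (cases d)
  case True
  hence nn: "\<forall>i. 0 \<le> z$i" and e: "len d (vr z) = ereal (\<Sum>i\<in>UNIV. real_of_int (z$i))"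
    using assms unfolding len_def by (auto split: if_splits)
  have "(\<Sum>i\<in>UNIV. real_of_int (z$i)) = real (nat (\<Sum>i\<in>UNIV. z$i))"
    using nn by (simp add: sum_nonneg)
  with e show ?thesis by metis
next
  case False
  hence e: "len d (vr z) = ereal (\<Sum>i\<in>UNIV. \<bar>real_of_int (z$i)\<bar>)" unfolding len_def by auto
  have "(\<Sum>i\<in>UNIV. \<bar>real_of_int (z$i)\<bar>) = real (nat (\<Sum>i\<in>UNIV. \<bar>z$i\<bar>))"
    by (simp add: sum_nonneg)
  with e show ?thesis by metis
qed

lemma len_vr0: "len d (vr 0) = 0"
  unfolding len_def by (simp add: zero_ereal_def)

lemma len_0[simp]: "len d 0 = 0"
  unfolding len_def by (simp add: zero_ereal_def)

lemma len0_imp: assumes "len d (vr s) = 0" shows "s = 0"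
proof (cases d)
  case True
  hence nn: "\<forall>i. 0 \<le> s$i" and e: "(\<Sum>i\<in>UNIV. real_of_int (s$i)) = 0"
    using assms unfolding len_def by (auto split: if_splits simp: zero_ereal_def)
  have "\<forall>i\<in>UNIV. real_of_int (s$i) = 0" using sum_nonneg_eq_0_iff[of UNIV "\<lambda>i. real_of_int (s$i)"] nn e by simp
  thus ?thesis by (simp add: vec_eq_iff)
next
  case False
  hence e: "(\<Sum>i\<in>UNIV. \<bar>real_of_int (s$i)\<bar>) = 0"
    using assms unfolding len_def by (auto simp: zero_ereal_def)
  have "\<forall>i\<in>UNIV. \<bar>real_of_int (s$i)\<bar> = 0" using sum_nonneg_eq_0_iff[of UNIV "\<lambda>i. \<bar>real_of_int (s$i)\<bar>"] e by simp
  thus ?thesis by (simp add: vec_eq_iff)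
qed

lemma sum_split_at: "(\<Sum>i\<in>UNIV. f i) = f j + (\<Sum>i\<in>UNIV - {j}. f i)" for f :: "'m::finite \<Rightarrow> real"
  by (simp add: sum.remove)

lemma len_step:
  fixes s :: "int^'m"
  assumes "len d (vr s) = ereal (real (Suc k))"
  obtains j where "s$j \<noteq> 0" "d \<Longrightarrow> 0 < s$j"
    "len d (vr (s - (if 0 < s$j then axis j 1 else - axis j 1))) = ereal (real k)"
proof -
  have "s \<noteq> 0"
  proof
    assume "s = 0"
    hence "ereal (real (Suc k)) = 0" using assms len_vr0[of d] by metis
    thus False by (simp add: zero_ereal_def)
  qed
  then obtain j where j: "s$j \<noteq> 0" by (auto simp: vec_eq_iff)
  define e :: "int^'m" where "e = (if 0 < s$j then axis j 1 else - axis j 1)"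
  have oth: "(s - e)$i = s$i" if "i \<noteq> j" for i using that by (simp add: e_def axis_def)
  have sj: "(s - e)$j = (if 0 < s$j then s$j - 1 else s$j + 1)" by (simp add: e_def axis_def)
  show ?thesis
  proof (cases d)
    case True
    hence nn: "\<forall>i. 0 \<le> s$i" and e1: "(\<Sum>i\<in>UNIV. real_of_int (s$i)) = real (Suc k)"
      using assms unfolding len_def by (auto split: if_splits)
    have pos: "0 < s$j" using nn j by (metis order.not_eq_order_implies_strict)
    have nn': "\<forall>i. 0 \<le> (s - e)$i" using nn pos oth sj by (metis diff_ge_0_iff_ge int_one_le_iff_zero_less)
    have "(\<Sum>i\<in>UNIV. real_of_int ((s - e)$i)) = real_of_int ((s-e)$j) + (\<Sum>i\<in>UNIV - {j}. real_of_int ((s - e)$i))"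
      by (rule sum_split_at)
    also have "\<dots> = real_of_int (s$j) - 1 + (\<Sum>i\<in>UNIV - {j}. real_of_int (s$i))"
      using sj pos oth by simp
    also have "\<dots> = (\<Sum>i\<in>UNIV. real_of_int (s$i)) - 1" using sum_split_at[of "\<lambda>i. real_of_int (s$i)" j] by simp
    finally have "(\<Sum>i\<in>UNIV. real_of_int ((s - e)$i)) = real k" using e1 by simp
    hence "len d (vr (s - e)) = ereal (real k)" using True nn' unfolding len_def by simp
    thus ?thesis using that j pos e_def by blast
  next
    case False
    hence e1: "(\<Sum>i\<in>UNIV. \<bar>real_of_int (s$i)\<bar>) = real (Suc k)"
      using assms unfolding len_def by auto
    have "(\<Sum>i\<in>UNIV. \<bar>real_of_int ((s - e)$i)\<bar>) = \<bar>real_of_int ((s-e)$j)\<bar> + (\<Sum>i\<in>UNIV - {j}. \<bar>real_of_int ((s - e)$i)\<bar>)"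
      by (rule sum_split_at)
    also have "\<dots> = \<bar>real_of_int (s$j)\<bar> - 1 + (\<Sum>i\<in>UNIV - {j}. \<bar>real_of_int (s$i)\<bar>)"
      using sj j oth by auto
    also have "\<dots> = (\<Sum>i\<in>UNIV. \<bar>real_of_int (s$i)\<bar>) - 1" using sum_split_at[of "\<lambda>i. \<bar>real_of_int (s$i)\<bar>" j] by simp
    finally have "(\<Sum>i\<in>UNIV. \<bar>real_of_int ((s - e)$i)\<bar>) = real k" using e1 by simp
    hence "len d (vr (s - e)) = ereal (real k)" using False unfolding len_def by simp
    thus ?thesis using that j False e_def by blast
  qed
qed

context fis begin

lemma walk_A:
  assumes "walk d k ((+) a ` H) Y" shows "\<exists>s. Y = (+) (a + s) ` H \<and> len d (vr s) \<le> ereal (real k)"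
proof -
  obtain p where p: "p 0 = (+) a ` H" "p k = Y"
    "\<And>i. i < k \<Longrightarrow> p i \<in> cosets_Zm H \<and> p (Suc i) \<in> cosets_Zm H \<and> cayley_adj d (p i) (p (Suc i))"
    using assms unfolding walk_def by blast
  have "i \<le> k \<longrightarrow> (\<exists>s. p i = (+) (a + s) ` H \<and> len d (vr s) \<le> ereal (real i))" for i
  proof (induction i)
    case 0
    show ?case using p(1) by (intro impI exI[of _ 0]) simp
  next
    case (Suc i)
    show ?case
    proof
      assume "Suc i \<le> k"
      then obtain s where s: "p i = (+) (a + s) ` H" "len d (vr s) \<le> ereal (real i)" using Suc by auto
      have st: "p i \<in> cosets_Zm H" "p (Suc i) \<in> cosets_Zm H" "cayley_adj d (p i) (p (Suc i))"
        using p(3)[of i] \<open>Suc i \<le> k\<close> by auto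
      show "\<exists>s. p (Suc i) = (+) (a + s) ` H \<and> len d (vr s) \<le> ereal (real (Suc i))"
      proof (cases "cayley_arc (p i) (p (Suc i))")
        case True
        then obtain j where j: "p (Suc i) = (\<lambda>v. v + axis j 1) ` p i" unfolding cayley_arc_def by auto
        have "p (Suc i) = (+) (a + s + axis j 1) ` H" using j s(1) shift_coset[of "axis j 1" "a + s" H] by metis
        hence "p (Suc i) = (+) (a + (s + axis j 1)) ` H" by (simp add: add.assoc)
        moreover have "len d (vr (s + axis j 1)) \<le> ereal (real (Suc i))"
        proof -
          have "len d (vr (s + axis j 1)) \<le> len d (vr s) + len d (axis j 1)" using len_add by (simp add: vr_axis)
          also have "\<dots> = len d (vr s) + 1" by (simp only: len_axis)
          also have "\<dots> \<le> ereal (real i) + 1" using s(2) by (rule add_right_mono)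
          finally show ?thesis by (simp add: one_ereal_def add.commute)
        qed
        ultimately show ?thesis by blast
      next
        case False
        hence nd: "\<not> d" and arc: "cayley_arc (p (Suc i)) (p i)" using st(3) unfolding cayley_adj_def by (auto split: if_splits)
        then obtain j where j: "p i = (\<lambda>v. v + axis j 1) ` p (Suc i)" unfolding cayley_arc_def by auto
        obtain c where c: "p (Suc i) = (+) c ` H" using st(2) unfolding cosets_Zm_def by auto
        have "(+) (c + axis j 1) ` H = (+) (a + s) ` H" using j c s(1) shift_coset by metis
        hence "c + axis j 1 - (a + s) \<in> H" using coset_eq[OF gH] by simp
        hence "c - (a + (s - axis j 1)) \<in> H" by (simp add: algebra_simps)
        hence "p (Suc i) = (+) (a + (s - axis j 1)) ` H" using c coset_eq[OF gH] by simp
        moreover have "len d (vr (s - axis j 1)) \<le> ereal (real (Suc i))"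
        proof -
          have "len d (vr (s - axis j 1)) \<le> len d (vr s) + len d (- axis j 1)"
            using len_add[of d "vr s" "- axis j 1"] by (simp add: vr_axis)
          also have "\<dots> = len d (vr s) + 1" using nd by (simp only: len_maxis)
          also have "\<dots> \<le> ereal (real i) + 1" using s(2) by (rule add_right_mono)
          finally show ?thesis by (simp add: one_ereal_def add.commute)
        qed
        ultimately show ?thesis by blast
      qed
    qed
  qed
  from this[of k] p(2) show ?thesis by auto
qed

lemma walk_B:
  "len d (vr s) = ereal (real k) \<Longrightarrow> walk d k ((+) a ` H) ((+) (a + s) ` H)"
proof (induction k arbitrary: s)
  case 0
  hence "s = 0" using len0_imp by (simp add: zero_ereal_def)
  thus ?case unfolding walk_def by (intro exI[of _ "\<lambda>_. (+) a ` H"]) simp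
next
  case (Suc k)
  obtain j where j: "s$j \<noteq> 0" "d \<Longrightarrow> 0 < s$j"
      "len d (vr (s - (if 0 < s$j then axis j 1 else - axis j 1))) = ereal (real k)"
    using len_step[OF Suc.prems] by blast
  define s' where "s' = s - (if 0 < s$j then axis j 1 else - axis j 1)"
  have "walk d k ((+) a ` H) ((+) (a + s') ` H)" using Suc.IH j(3) s'_def by blast
  then obtain p where p: "p 0 = (+) a ` H" "p k = (+) (a + s') ` H"
    "\<And>i. i < k \<Longrightarrow> p i \<in> cosets_Zm H \<and> p (Suc i) \<in> cosets_Zm H \<and> cayley_adj d (p i) (p (Suc i))"
    unfolding walk_def by blast
  define q where "q = (\<lambda>i. if i \<le> k then p i else (+) (a + s) ` H)"
  have adj: "cayley_adj d ((+) (a + s') ` H) ((+) (a + s) ` H)"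
  proof (cases "0 < s$j")
    case True
    hence "a + s' + axis j 1 = a + s" using s'_def by simp
    hence "(+) (a + s) ` H = (\<lambda>v. v + axis j 1) ` ((+) (a + s') ` H)" using shift_coset[of "axis j 1" "a + s'" H]
      by metis
    hence "cayley_arc ((+) (a + s') ` H) ((+) (a + s) ` H)" unfolding cayley_arc_def by blast
    thus ?thesis unfolding cayley_adj_def by simp
  next
    case False
    hence nd: "\<not> d" using j(2) by blast
    have "a + s + axis j 1 = a + s'" using s'_def False by simp
    hence "(+) (a + s') ` H = (\<lambda>v. v + axis j 1) ` ((+) (a + s) ` H)" using shift_coset[of "axis j 1" "a + s" H]
      by metis
    hence "cayley_arc ((+) (a + s) ` H) ((+) (a + s') ` H)" unfolding cayley_arc_def by blast
    thus ?thesis unfolding cayley_adj_def using nd by simp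
  qed
  have "\<forall>i<Suc k. q i \<in> cosets_Zm H \<and> q (Suc i) \<in> cosets_Zm H \<and> cayley_adj d (q i) (q (Suc i))"
  proof (intro allI impI)
    fix i assume "i < Suc k"
    show "q i \<in> cosets_Zm H \<and> q (Suc i) \<in> cosets_Zm H \<and> cayley_adj d (q i) (q (Suc i))"
    proof (cases "i < k")
      case True thus ?thesis using p(3)[of i] unfolding q_def by auto
    next
      case False
      hence "i = k" using \<open>i < Suc k\<close> by simp
      thus ?thesis using p(2) adj unfolding q_def by (simp add: coset_in)
    qed
  qed
  moreover have "q 0 = (+) a ` H" "q (Suc k) = (+) (a + s) ` H" using p(1) unfolding q_def by auto
  ultimately show ?case unfolding walk_def by blast
qed

end


context fis begin

lemma dist_eq:
  assumes u0: "u0 \<in> H" "len d (vr (b - a + u0)) \<noteq> \<infinity>"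
  shows "ereal (real (dist_G d H ((+) a ` H) ((+) b ` H))) = (INF u\<in>H. len d (vr (b - a + u)))"
proof -
  let ?X = "(+) a ` H" and ?Y = "(+) b ` H"
  have wB: "walk d k ?X ?Y" if "u \<in> H" "len d (vr (b - a + u)) = ereal (real k)" for u k
  proof -
    have "walk d k ?X ((+) (a + (b - a + u)) ` H)" by (rule walk_B[OF that(2)])
    moreover have "(+) (a + (b - a + u)) ` H = ?Y" using coset_eq[OF gH] that(1) by simp
    ultimately show ?thesis by simp
  qed
  obtain k0 where "len d (vr (b - a + u0)) = ereal (real k0)" using len_int_finite u0(2) by blast
  hence ex: "walk d k0 ?X ?Y" using wB u0(1) by blast
  define n0 where "n0 = (LEAST n. walk d n ?X ?Y)"
  have dn: "dist_G d H ?X ?Y = n0" unfolding n0_def by (rule dist_G_walk)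
  have w0: "walk d n0 ?X ?Y" unfolding n0_def using ex by (rule LeastI)
  show ?thesis unfolding dn
  proof (rule antisym)
    obtain s where s: "?Y = (+) (a + s) ` H" "len d (vr s) \<le> ereal (real n0)" using walk_A[OF w0] by blast
    have "b - (a + s) \<in> H" using s(1) coset_eq[OF gH] by simp
    hence "a + s - b \<in> H" using grpD(3)[OF gH] by (metis minus_diff_eq)
    hence "(INF u\<in>H. len d (vr (b - a + u))) \<le> len d (vr (b - a + (a + s - b)))" by (rule INF_lower)
    also have "\<dots> = len d (vr s)" by simp
    finally show "(INF u\<in>H. len d (vr (b - a + u))) \<le> ereal (real n0)" using s(2) by simp
  next
    show "ereal (real n0) \<le> (INF u\<in>H. len d (vr (b - a + u)))"
    proof (rule INF_greatest)
      fix u assume u: "u \<in> H"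
      show "ereal (real n0) \<le> len d (vr (b - a + u))"
      proof (cases "len d (vr (b - a + u)) = \<infinity>")
        case True thus ?thesis by simp
      next
        case False
        then obtain k where k: "len d (vr (b - a + u)) = ereal (real k)" using len_int_finite by blast
        have "n0 \<le> k" unfolding n0_def using wB[OF u k] by (rule Least_le)
        thus ?thesis using k by simp
      qed
    qed
  qed
qed

lemma fq_grid:
  "fq d (lattice_bar H) (hh H *\<^sub>R vr w) = ereal (hh H) * (INF u\<in>H. len d (vr (w + u)))"
proof -
  have "fq d (lattice_bar H) (hh H *\<^sub>R vr w) = (INF u\<in>H. len d (hh H *\<^sub>R vr w + hh H *\<^sub>R vr u))"
    unfolding fq_def Lbar by (simp add: image_comp o_def)
  also have "\<dots> = (INF u\<in>H. ereal (hh H) * len d (vr (w + u)))"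
    by (rule INF_cong[OF refl]) (metis len_scale[OF hh_pos] scaleR_add_right vr_add)
  also have "\<dots> = ereal (hh H) * (INF u\<in>H. len d (vr (w + u)))"
  proof -
    have "(INF u\<in>H. ereal (hh H) * len d (vr (w + u))) = Inf {ereal (hh H) * x | x. x \<in> (\<lambda>u. len d (vr (w + u))) ` H}"
      by (rule arg_cong[where f=Inf]) auto
    also have "\<dots> = ereal (hh H) * Inf {x. x \<in> (\<lambda>u. len d (vr (w + u))) ` H}"
      by (rule ereal_Inf_cmult[OF hh_pos])
    finally show ?thesis by simp
  qed
  finally show ?thesis .
qed

end

context fis begin

definition Phi :: "bool \<Rightarrow> (int^'m) set \<Rightarrow> real" where
  "Phi d Y = real_of_ereal (fq d (lattice_bar H) (hh H *\<^sub>R vr (rep Y)))"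

lemma Phi_nonneg: "0 \<le> Phi d Y"
  unfolding Phi_def by (intro real_of_ereal_pos fq_nonneg)

lemma dist_phi:
  assumes B: "\<forall>x. fq d (lattice_bar H) x \<le> ereal B" and XY: "X \<in> cosets_Zm H" "Y \<in> cosets_Zm H"
  shows "real (dist_G d H X Y) = real_of_ereal (fq d (lattice_bar H) (hh H *\<^sub>R vr (rep Y - rep X))) / hh H"
proof -
  let ?w = "rep Y - rep X"
  have fg: "fq d (lattice_bar H) (hh H *\<^sub>R vr ?w) = ereal (hh H) * (INF u\<in>H. len d (vr (?w + u)))"
    by (rule fq_grid)
  have "fq d (lattice_bar H) (hh H *\<^sub>R vr ?w) < \<infinity>" using B[rule_format, of "hh H *\<^sub>R vr ?w"]
    by (cases "fq d (lattice_bar H) (hh H *\<^sub>R vr ?w)") auto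
  hence "(INF u\<in>H. len d (vr (?w + u))) < \<infinity>" using fg hh_pos by (cases "(INF u\<in>H. len d (vr (?w + u)))") auto
  hence "\<exists>u\<in>H. len d (vr (?w + u)) < \<infinity>" by (simp only: INF_less_iff)
  then obtain u0 where u0: "u0 \<in> H" "len d (vr (?w + u0)) < \<infinity>" by blast
  have de: "ereal (real (dist_G d H ((+) (rep X) ` H) ((+) (rep Y) ` H))) = (INF u\<in>H. len d (vr (?w + u)))"
    by (rule dist_eq[OF u0(1)]) (use u0(2) in auto)
  have "dist_G d H X Y = dist_G d H ((+) (rep X) ` H) ((+) (rep Y) ` H)" using rep_eq XY by metis
  hence "fq d (lattice_bar H) (hh H *\<^sub>R vr ?w) = ereal (hh H * real (dist_G d H X Y))"
    using fg de by (metis times_ereal.simps(1))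
  thus ?thesis using hh_pos by simp
qed

end

context fis begin

lemma sum_shift:
  assumes X: "X \<in> cosets_Zm H"
  shows "(\<Sum>Y\<in>cosets_Zm H. G (fq d (lattice_bar H) (hh H *\<^sub>R vr (rep Y - rep X))))
       = (\<Sum>Y\<in>cosets_Zm H. G (fq d (lattice_bar H) (hh H *\<^sub>R vr (rep Y))))"
proof -
  define T where "T = (\<lambda>Y. (\<lambda>v. v + (- rep X)) ` Y)"
  define T' where "T' = (\<lambda>Y. (\<lambda>v. v + rep X) ` (Y :: (int^'m) set))"
  have TY: "T Y = (+) (rep Y + - rep X) ` H" if "Y \<in> cosets_Zm H" for Y
    unfolding T_def using rep_eq[OF that] shift_coset by metis
  have T'Y: "T' Y = (+) (rep Y + rep X) ` H" if "Y \<in> cosets_Zm H" for Y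
    unfolding T'_def using rep_eq[OF that] shift_coset by metis
  have bij: "bij_betw T (cosets_Zm H) (cosets_Zm H)"
  proof (rule bij_betw_byWitness[of _ T'])
    show "\<forall>Y\<in>cosets_Zm H. T' (T Y) = Y" unfolding T_def T'_def by (auto simp: image_iff)
    show "\<forall>Y\<in>cosets_Zm H. T (T' Y) = Y" unfolding T_def T'_def by (auto simp: image_iff)
    show "T ` cosets_Zm H \<subseteq> cosets_Zm H" using TY coset_in by auto
    show "T' ` cosets_Zm H \<subseteq> cosets_Zm H" using T'Y coset_in by auto
  qed
  have eq: "G (fq d (lattice_bar H) (hh H *\<^sub>R vr (rep (T Y)))) = G (fq d (lattice_bar H) (hh H *\<^sub>R vr (rep Y - rep X)))"
    if Y: "Y \<in> cosets_Zm H" for Y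
  proof -
    have TYc: "T Y \<in> cosets_Zm H" using TY[OF Y] coset_in by simp
    have "rep Y - rep X \<in> T Y" using TY[OF Y] coset_self[OF gH] by simp
    hence u: "rep (T Y) - (rep Y - rep X) \<in> H"
      using coset_of[OF _ TYc] grpD(3)[OF gH] by (metis minus_diff_eq)
    have "hh H *\<^sub>R vr (rep (T Y)) = hh H *\<^sub>R vr (rep Y - rep X) + hh H *\<^sub>R vr (rep (T Y) - (rep Y - rep X))"
      by (simp add: scaleR_diff_right)
    moreover have "hh H *\<^sub>R vr (rep (T Y) - (rep Y - rep X)) \<in> lattice_bar H" using u L_mem by blast
    ultimately show ?thesis using fq_periodic[OF grpL] by metis
  qed
  have "(\<Sum>Y\<in>cosets_Zm H. G (fq d (lattice_bar H) (hh H *\<^sub>R vr (rep Y - rep X))))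
      = (\<Sum>Y\<in>cosets_Zm H. G (fq d (lattice_bar H) (hh H *\<^sub>R vr (rep (T Y)))))"
    using eq by simp
  also have "\<dots> = (\<Sum>Y\<in>cosets_Zm H. G (fq d (lattice_bar H) (hh H *\<^sub>R vr (rep Y))))"
    by (rule sum.reindex_bij_betw[OF bij, where g="\<lambda>Y. G (fq d (lattice_bar H) (hh H *\<^sub>R vr (rep Y)))"])
  finally show ?thesis .
qed

lemma xi_formula:
  assumes B: "\<forall>x. fq d (lattice_bar H) x \<le> ereal B" and a: "\<alpha> > 0"
  shows "hh H * xi_G d \<alpha> H = ((1 / real (index_Zm H)) * (\<Sum>Y\<in>cosets_Zm H. Phi d Y powr \<alpha>)) powr (1 / \<alpha>)"
proof -
  let ?N = "real (index_Zm H)" and ?C = "cosets_Zm H" and ?h = "hh H"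
  define S where "S = (\<Sum>Y\<in>?C. Phi d Y powr \<alpha>)"
  have N: "?N = real (card ?C)" unfolding index_Zm_def ..
  have Npos: "?N > 0" using N_pos by simp
  have inner: "(\<Sum>Y\<in>?C. real (dist_G d H X Y) powr \<alpha>) = S / ?h powr \<alpha>" if X: "X \<in> ?C" for X
  proof -
    have "(\<Sum>Y\<in>?C. real (dist_G d H X Y) powr \<alpha>)
        = (\<Sum>Y\<in>?C. (\<lambda>t. (real_of_ereal t / ?h) powr \<alpha>) (fq d (lattice_bar H) (?h *\<^sub>R vr (rep Y - rep X))))"
      using dist_phi[OF B X] by simp
    also have "\<dots> = (\<Sum>Y\<in>?C. (\<lambda>t. (real_of_ereal t / ?h) powr \<alpha>) (fq d (lattice_bar H) (?h *\<^sub>R vr (rep Y))))"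
      by (rule sum_shift[OF X])
    also have "\<dots> = (\<Sum>Y\<in>?C. Phi d Y powr \<alpha> / ?h powr \<alpha>)"
      unfolding Phi_def using hh_pos fq_nonneg by (simp add: powr_divide real_of_ereal_pos)
    also have "\<dots> = S / ?h powr \<alpha>" unfolding S_def by (simp add: sum_divide_distrib)
    finally show ?thesis .
  qed
  have "xi_G d \<alpha> H = ((1 / ?N\<^sup>2) * (\<Sum>X\<in>?C. S / ?h powr \<alpha>)) powr (1/\<alpha>)"
    unfolding xi_G_def N using inner by simp
  also have "\<dots> = ((1 / ?N) * S / ?h powr \<alpha>) powr (1/\<alpha>)"
    using Npos by (simp add: N power2_eq_square)
  also have "\<dots> = ((1 / ?N) * S) powr (1/\<alpha>) / ?h"
  proof -
    have "(?h powr \<alpha>) powr (1/\<alpha>) = ?h" using a hh_pos by (simp add: powr_powr)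
    moreover have "0 \<le> (1 / ?N) * S" unfolding S_def using Npos by (simp add: sum_nonneg)
    moreover have "((1 / ?N) * S / ?h powr \<alpha>) powr (1/\<alpha>) = ((1 / ?N) * S) powr (1/\<alpha>) / (?h powr \<alpha>) powr (1/\<alpha>)"
      by (rule powr_divide)
    ultimately show ?thesis by simp
  qed
  finally show ?thesis unfolding S_def using hh_pos by simp
qed

end

lemma fundamental_domain_fundom: "fundamental_domain L F \<longleftrightarrow> fundom L F"
  unfolding fundamental_domain_def fundom_def ..

lemma len_tile_le:
  fixes x :: "real^'m"
  assumes "x \<in> tile s h" "h > 0"
  shows "len d (if s then x else - x) \<le> ereal (real CARD('m) * h)"
proof -
  define y where "y = (if s then x else - x)"
  have y: "0 \<le> y$i \<and> y$i \<le> h" for i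
    using assms unfolding tile_def y_def by (cases s) (auto dest: spec[of _ i])
  have "len d y = ereal (\<Sum>i\<in>UNIV. y$i)" using y by (intro len_pos) auto
  also have "(\<Sum>i\<in>UNIV. y$i) \<le> (\<Sum>i\<in>(UNIV::'m set). h)" by (rule sum_mono) (use y in auto)
  finally show ?thesis unfolding y_def by simp
qed

context fis begin

lemma zeta_bounds:
  assumes B: "\<forall>x. fq d (lattice_bar H) x \<le> ereal B" and a: "\<alpha> > 0"
  defines "c \<equiv> real CARD('m) * hh H"
  defines "I \<equiv> (let F = SOME F. fundamental_domain (lattice_bar H) F in
      (1 / measure lebesgue F) * (LINT x:F|lebesgue. real_of_ereal (dist_quot d (lattice_bar H) 0 x) powr \<alpha>))"
  shows "I \<le> (1 / real (index_Zm H)) * (\<Sum>Y\<in>cosets_Zm H. (Phi d Y + c) powr \<alpha>)"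
    and "(1 / real (index_Zm H)) * (\<Sum>Y\<in>cosets_Zm H. (max 0 (Phi d Y - c)) powr \<alpha>) \<le> I"
    and "zeta_L d \<alpha> (lattice_bar H) = I powr (1 / \<alpha>)"
proof -
  let ?L = "lattice_bar H" and ?C = "cosets_Zm H" and ?h = "hh H" and ?N = "real (index_Zm H)"
  define F0 where "F0 = (SOME F. fundamental_domain ?L F)"
  have F0: "fundom ?L F0" unfolding F0_def fundamental_domain_fundom[symmetric]
    using FC_fundom[of True] fundamental_domain_fundom by (metis someI)
  have F0m: "F0 \<in> sets lebesgue" using F0 unfolding fundom_def by auto
  define g where "g x = real_of_ereal (fq d ?L x) powr \<alpha>" for x
  have I_eq: "I = (1 / measure lebesgue F0) * (LINT x:F0|lebesgue. g x)"
    unfolding I_def F0_def g_def Let_def by (simp add: dist_quot_fq)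
  have fqm[measurable]: "fq d ?L \<in> borel_measurable lebesgue" by (rule fq_meas[OF countL])
  have gm[measurable]: "g \<in> borel_measurable lebesgue" unfolding g_def by measurable
  have g0: "0 \<le> g x" for x unfolding g_def by simp
  have fqB: "real_of_ereal (fq d ?L x) \<le> B" "fq d ?L x = ereal (real_of_ereal (fq d ?L x))" for x
  proof -
    have "0 \<le> fq d ?L x" "fq d ?L x \<le> ereal B" using fq_nonneg B by auto
    thus "real_of_ereal (fq d ?L x) \<le> B" "fq d ?L x = ereal (real_of_ereal (fq d ?L x))"
      by (cases "fq d ?L x"; simp)+
  qed
  have gB: "g x \<le> B powr \<alpha>" for x
    unfolding g_def using fqB(1)[of x] a by (intro powr_mono2) (auto intro: real_of_ereal_pos fq_nonneg)
  have per: "ennreal (g (x + v)) = ennreal (g x)" if "v \<in> ?L" for x v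
    unfolding g_def using fq_periodic[OF grpL that] by simp
  have tr: "(\<integral>\<^sup>+x. ennreal (g x) * indicator F0 x \<partial>lebesgue)
       = (\<Sum>Y\<in>?C. \<integral>\<^sup>+x. ennreal (g (?h *\<^sub>R vr (rep Y) + x)) * indicator (tile s ?h :: (real^'m) set) x \<partial>lebesgue)" for s
  proof -
    have "(\<integral>\<^sup>+x. ennreal (g x) * indicator F0 x \<partial>lebesgue) = (\<integral>\<^sup>+x. ennreal (g x) * indicator (FC s H) x \<partial>lebesgue)"
      by (rule transfer[OF countL infL grpL F0 FC_fundom]) (use per in auto)
    also have "\<dots> = (\<Sum>Y\<in>?C. \<integral>\<^sup>+x. ennreal (g (?h *\<^sub>R vr (rep Y) + x)) * indicator (tile s ?h) x \<partial>lebesgue)"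
      by (rule int_FC) measurable
    finally show ?thesis .
  qed
  have tr1: "emeasure lebesgue F0 = (\<Sum>Y\<in>?C. emeasure lebesgue (tile s ?h :: (real^'m) set))" for s
  proof -
    have "emeasure lebesgue F0 = (\<integral>\<^sup>+x. indicator F0 x \<partial>lebesgue)" using F0m by simp
    also have "\<dots> = (\<integral>\<^sup>+x. indicator (FC s H) x \<partial>lebesgue)"
      using transfer[OF countL infL grpL F0 FC_fundom, of "\<lambda>_. 1"] by simp
    also have "\<dots> = (\<Sum>Y\<in>?C. \<integral>\<^sup>+x. indicator (tile s ?h :: (real^'m) set) x \<partial>lebesgue)"
      using int_FC[of "\<lambda>_. 1" s] by simp
    also have "\<dots> = (\<Sum>Y\<in>?C. emeasure lebesgue (tile s ?h :: (real^'m) set))"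
      by (intro sum.cong refl nn_integral_indicator tile_leb)
    finally show ?thesis .
  qed
  define mu where "mu s = measure lebesgue (tile s ?h :: (real^'m) set)" for s
  have mu: "emeasure lebesgue (tile s ?h :: (real^'m) set) = ennreal (mu s)" "mu s > 0" for s
  proof -
    have "0 < emeasure lebesgue (tile s ?h :: (real^'m) set)" "emeasure lebesgue (tile s ?h :: (real^'m) set) < \<infinity>"
      using tile_emeasure[OF hh_pos] by auto
    hence e: "emeasure lebesgue (tile s ?h :: (real^'m) set) = ennreal (mu s)" unfolding mu_def
      using emeasure_eq_ennreal_measure by (metis less_irrefl top.not_eq_extremum infinity_ennreal_def)
    thus "emeasure lebesgue (tile s ?h :: (real^'m) set) = ennreal (mu s)" .
    show "mu s > 0" using e \<open>0 < emeasure lebesgue (tile s ?h :: (real^'m) set)\<close> by simp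
  qed
  have Npos: "?N > 0" using N_pos by simp
  have cardN: "real (card ?C) = ?N" unfolding index_Zm_def ..
  have eF0: "emeasure lebesgue F0 = ennreal (?N * mu s)" for s
  proof -
    have "emeasure lebesgue F0 = ennreal ?N * ennreal (mu s)"
      using tr1[of s] mu(1)[of s] cardN by (simp add: ennreal_of_nat_eq_real_of_nat)
    also have "\<dots> = ennreal (?N * mu s)" using mu(2)[of s] by (simp add: ennreal_mult)
    finally show ?thesis .
  qed
  have mF0: "measure lebesgue F0 = ?N * mu s" for s
    using eF0[of s] mu(2)[of s] Npos by (simp add: measure_def)
  have integ: "integrable lebesgue (\<lambda>x. indicator F0 x *\<^sub>R g x)"
    by (rule integrableI_bounded_set_indicator[where B="B powr \<alpha>"]) (use F0m eF0[of True] gB g0 in auto)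
  define J where "J = (LINT x:F0|lebesgue. g x)"
  have J0: "0 \<le> J" unfolding J_def set_lebesgue_integral_def using g0 by (simp add: integral_nonneg)
  have eJ: "(\<integral>\<^sup>+x. ennreal (g x) * indicator F0 x \<partial>lebesgue) = ennreal J"
  proof -
    have "(\<integral>\<^sup>+x. ennreal (indicator F0 x *\<^sub>R g x) \<partial>lebesgue) = ennreal J"
      unfolding J_def set_lebesgue_integral_def by (rule nn_integral_eq_integral[OF integ]) (use g0 in simp)
    moreover have "ennreal (indicator F0 x *\<^sub>R g x) = ennreal (g x) * indicator F0 x" for x
      by (simp add: indicator_def)
    ultimately show ?thesis by simp
  qed
  have up: "(\<integral>\<^sup>+x. ennreal (g (?h *\<^sub>R vr (rep Y) + x)) * indicator (tile True ?h :: (real^'m) set) x \<partial>lebesgue)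
      \<le> ennreal ((Phi d Y + c) powr \<alpha> * mu True)" for Y
  proof -
    have "(\<integral>\<^sup>+x. ennreal (g (?h *\<^sub>R vr (rep Y) + x)) * indicator (tile True ?h :: (real^'m) set) x \<partial>lebesgue)
        \<le> (\<integral>\<^sup>+x. ennreal ((Phi d Y + c) powr \<alpha>) * indicator (tile True ?h :: (real^'m) set) x \<partial>lebesgue)"
    proof (rule nn_integral_mono)
      fix x :: "real^'m"
      show "ennreal (g (?h *\<^sub>R vr (rep Y) + x)) * indicator (tile True ?h :: (real^'m) set) x \<le> ennreal ((Phi d Y + c) powr \<alpha>) * indicator (tile True ?h :: (real^'m) set) x"
      proof (cases "x \<in> tile True ?h")
        case True
        have "fq d ?L (?h *\<^sub>R vr (rep Y) + x) \<le> fq d ?L (?h *\<^sub>R vr (rep Y)) + len d (?h *\<^sub>R vr (rep Y) + x - ?h *\<^sub>R vr (rep Y))"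
          by (rule fq_tri) (use infL in auto)
        also have "\<dots> \<le> fq d ?L (?h *\<^sub>R vr (rep Y)) + ereal c"
          using len_tile_le[OF True hh_pos, of d] unfolding c_def by (simp add: add_left_mono)
        finally have "real_of_ereal (fq d ?L (?h *\<^sub>R vr (rep Y) + x)) \<le> Phi d Y + c"
          unfolding Phi_def using fqB(2)[of "?h *\<^sub>R vr (rep Y) + x"] fqB(2)[of "?h *\<^sub>R vr (rep Y)"]
          by (metis plus_ereal.simps(1) ereal_less_eq(3))
        hence "g (?h *\<^sub>R vr (rep Y) + x) \<le> (Phi d Y + c) powr \<alpha>"
          unfolding g_def using a by (intro powr_mono2) (auto intro: real_of_ereal_pos fq_nonneg)
        thus ?thesis using True by simp
      qed simp
    qed
    also have "\<dots> = ennreal ((Phi d Y + c) powr \<alpha>) * ennreal (mu True)"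
      by (subst nn_integral_cmult_indicator[OF tile_leb]) (simp add: mu(1))
    also have "\<dots> = ennreal ((Phi d Y + c) powr \<alpha> * mu True)" by (metis ennreal_mult'' less_imp_le mu(2))
    finally show ?thesis .
  qed
  have lo: "ennreal ((max 0 (Phi d Y - c)) powr \<alpha> * mu False)
     \<le> (\<integral>\<^sup>+x. ennreal (g (?h *\<^sub>R vr (rep Y) + x)) * indicator (tile False ?h :: (real^'m) set) x \<partial>lebesgue)" for Y
  proof -
    have "ennreal ((max 0 (Phi d Y - c)) powr \<alpha> * mu False) = ennreal ((max 0 (Phi d Y - c)) powr \<alpha>) * ennreal (mu False)"
      by (metis ennreal_mult'' less_imp_le mu(2))
    also have "\<dots> = (\<integral>\<^sup>+x. ennreal ((max 0 (Phi d Y - c)) powr \<alpha>) * indicator (tile False ?h :: (real^'m) set) x \<partial>lebesgue)"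
      by (subst nn_integral_cmult_indicator[OF tile_leb]) (simp add: mu(1))
    also have "\<dots> \<le> (\<integral>\<^sup>+x. ennreal (g (?h *\<^sub>R vr (rep Y) + x)) * indicator (tile False ?h :: (real^'m) set) x \<partial>lebesgue)"
    proof (rule nn_integral_mono)
      fix x :: "real^'m"
      show "ennreal ((max 0 (Phi d Y - c)) powr \<alpha>) * indicator (tile False ?h :: (real^'m) set) x \<le> ennreal (g (?h *\<^sub>R vr (rep Y) + x)) * indicator (tile False ?h :: (real^'m) set) x"
      proof (cases "x \<in> tile False ?h")
        case True
        have "fq d ?L (?h *\<^sub>R vr (rep Y)) \<le> fq d ?L (?h *\<^sub>R vr (rep Y) + x) + len d (?h *\<^sub>R vr (rep Y) - (?h *\<^sub>R vr (rep Y) + x))"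
          by (rule fq_tri) (use infL in auto)
        also have "\<dots> \<le> fq d ?L (?h *\<^sub>R vr (rep Y) + x) + ereal c"
          using len_tile_le[OF True hh_pos, of d] unfolding c_def by (simp add: add_left_mono)
        finally have "Phi d Y \<le> real_of_ereal (fq d ?L (?h *\<^sub>R vr (rep Y) + x)) + c"
          unfolding Phi_def using fqB(2)[of "?h *\<^sub>R vr (rep Y) + x"] fqB(2)[of "?h *\<^sub>R vr (rep Y)"]
          by (metis plus_ereal.simps(1) ereal_less_eq(3))
        hence "max 0 (Phi d Y - c) \<le> real_of_ereal (fq d ?L (?h *\<^sub>R vr (rep Y) + x))"
          using real_of_ereal_pos[OF fq_nonneg] by auto
        hence "(max 0 (Phi d Y - c)) powr \<alpha> \<le> g (?h *\<^sub>R vr (rep Y) + x)"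
          unfolding g_def using a by (intro powr_mono2) auto
        thus ?thesis using True by (simp add: ennreal_leI)
      qed simp
    qed
    finally show ?thesis .
  qed
  have sU: "ennreal J \<le> ennreal ((\<Sum>Y\<in>?C. (Phi d Y + c) powr \<alpha>) * mu True)"
  proof -
    have "ennreal J = (\<Sum>Y\<in>?C. \<integral>\<^sup>+x. ennreal (g (?h *\<^sub>R vr (rep Y) + x)) * indicator (tile True ?h :: (real^'m) set) x \<partial>lebesgue)"
      using eJ tr[of True] by simp
    also have "\<dots> \<le> (\<Sum>Y\<in>?C. ennreal ((Phi d Y + c) powr \<alpha> * mu True))"
      by (rule sum_mono) (rule up)
    also have "\<dots> = ennreal ((\<Sum>Y\<in>?C. (Phi d Y + c) powr \<alpha>) * mu True)"
    proof -
      have nn: "0 \<le> (Phi d Y + c) powr \<alpha> * mu True" for Y using mu(2)[of True] by (simp add: less_imp_le)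
      show ?thesis using sum_ennreal[of ?C "\<lambda>Y. (Phi d Y + c) powr \<alpha> * mu True", OF nn] by (simp add: sum_distrib_right)
    qed
    finally show ?thesis .
  qed
  have sL: "ennreal ((\<Sum>Y\<in>?C. (max 0 (Phi d Y - c)) powr \<alpha>) * mu False) \<le> ennreal J"
  proof -
    have "ennreal ((\<Sum>Y\<in>?C. (max 0 (Phi d Y - c)) powr \<alpha>) * mu False) = (\<Sum>Y\<in>?C. ennreal ((max 0 (Phi d Y - c)) powr \<alpha> * mu False))"
    proof -
      have nn: "0 \<le> (max 0 (Phi d Y - c)) powr \<alpha> * mu False" for Y using mu(2)[of False] by (simp add: less_imp_le)
      show ?thesis using sum_ennreal[of ?C "\<lambda>Y. (max 0 (Phi d Y - c)) powr \<alpha> * mu False", OF nn] by (simp add: sum_distrib_right)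
    qed
    also have "\<dots> \<le> (\<Sum>Y\<in>?C. \<integral>\<^sup>+x. ennreal (g (?h *\<^sub>R vr (rep Y) + x)) * indicator (tile False ?h :: (real^'m) set) x \<partial>lebesgue)"
      by (rule sum_mono) (rule lo)
    also have "\<dots> = ennreal J"
      using eJ tr[of False] by simp
    finally show ?thesis .
  qed
  have JU: "J \<le> (\<Sum>Y\<in>?C. (Phi d Y + c) powr \<alpha>) * mu True"
  proof -
    have "0 \<le> (\<Sum>Y\<in>?C. (Phi d Y + c) powr \<alpha>) * mu True" using mu(2)[of True] by (simp add: sum_nonneg less_imp_le)
    thus ?thesis using sU by simp
  qed
  have JL: "(\<Sum>Y\<in>?C. (max 0 (Phi d Y - c)) powr \<alpha>) * mu False \<le> J"
    using sL J0 by simp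
  show "I \<le> (1 / ?N) * (\<Sum>Y\<in>?C. (Phi d Y + c) powr \<alpha>)"
    unfolding I_eq J_def[symmetric] mF0[of True] using JU mu(2)[of True] Npos
    by (simp add: field_simps)
  show "(1 / ?N) * (\<Sum>Y\<in>?C. (max 0 (Phi d Y - c)) powr \<alpha>) \<le> I"
    unfolding I_eq J_def[symmetric] mF0[of False] using JL mu(2)[of False] Npos
    by (simp add: field_simps)
  show "zeta_L d \<alpha> ?L = I powr (1 / \<alpha>)"
    unfolding zeta_L_def I_def Let_def ..
qed

end

definition Ppre :: "(real^'m) set set \<Rightarrow> bool" where
  "Ppre U \<longleftrightarrow> U \<subseteq> Xm \<and> openin (top_of_set (unimod :: (real^'m^'m) set)) {A \<in> unimod. lattice_of A \<in> U}"

lemma istop_Ppre: "istopology (Ppre :: (real^'m) set set \<Rightarrow> bool)"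
  unfolding istopology_def
proof (intro conjI allI impI)
  fix S T :: "(real^'m) set set" assume "Ppre S" "Ppre T"
  moreover have "{A \<in> (unimod :: (real^'m^'m) set). lattice_of A \<in> S \<inter> T}
     = {A \<in> unimod. lattice_of A \<in> S} \<inter> {A \<in> unimod. lattice_of A \<in> T}" by auto
  ultimately show "Ppre (S \<inter> T)" unfolding Ppre_def by (auto intro: openin_Int)
next
  fix KK :: "(real^'m) set set set" assume a: "\<forall>K\<in>KK. Ppre K"
  have "{A \<in> (unimod :: (real^'m^'m) set). lattice_of A \<in> \<Union>KK} = (\<Union>K\<in>KK. {A \<in> unimod. lattice_of A \<in> K})" by auto
  moreover have "openin (top_of_set (unimod :: (real^'m^'m) set)) (\<Union>K\<in>KK. {A \<in> unimod. lattice_of A \<in> K})"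
    using a unfolding Ppre_def by (intro openin_Union) auto
  ultimately show "Ppre (\<Union>KK)" using a unfolding Ppre_def by auto
qed

lemma openin_Xm: "openin (Xm_top :: (real^'m) set topology) U \<longleftrightarrow> Ppre U"
proof -
  have "Xm_top = topology (Ppre :: (real^'m) set set \<Rightarrow> bool)"
    unfolding Xm_top_def Ppre_def ..
  hence "openin (Xm_top :: (real^'m) set topology) = Ppre" using istop_Ppre by (metis topology_inverse')
  thus ?thesis by simp
qed

lemma norm_mv_le:
  fixes M :: "real^'m^'m"
  shows "norm (M *v w) \<le> (\<Sum>i\<in>UNIV. \<Sum>j\<in>UNIV. \<bar>M $ i $ j\<bar>) * norm w"
proof -
  have "norm (M *v w) \<le> onorm ((*v) M) * norm w" by (rule onorm[OF matrix_vector_mul_bounded_linear])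
  also have "\<dots> \<le> (\<Sum>i\<in>UNIV. \<Sum>j\<in>UNIV. \<bar>M $ i $ j\<bar>) * norm w"
    by (rule mult_right_mono[OF onorm_le_matrix_component_sum]) simp
  finally show ?thesis .
qed

lemma sum_abs_le_norm:
  fixes M :: "real^'m^'m"
  shows "(\<Sum>i\<in>UNIV. \<Sum>j\<in>UNIV. \<bar>M $ i $ j\<bar>) \<le> real CARD('m) * real CARD('m) * norm M"
proof -
  have "\<bar>M $ i $ j\<bar> \<le> norm M" for i j using component_le_norm_cart[of "M$i" j] Finite_Cartesian_Product.norm_nth_le[of M i] by linarith
  hence "(\<Sum>i\<in>UNIV. \<Sum>j\<in>UNIV. \<bar>M $ i $ j\<bar>) \<le> (\<Sum>i\<in>(UNIV::'m set). \<Sum>j\<in>(UNIV::'m set). norm M)"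
    by (intro sum_mono) auto
  thus ?thesis by simp
qed

definition QR :: "real \<Rightarrow> (real^'m) set set" where
  "QR R = {L \<in> Xm. \<exists>r<R. \<forall>x. \<exists>v\<in>L. norm (x + v) \<le> r}"

lemma lattice_of_vr: "lattice_of A = {A *v vr z | z. True}"
  unfolding lattice_of_def vr_def ..

lemma QR_open: "openin (Xm_top :: (real^'m) set topology) (QR R)"
  unfolding openin_Xm Ppre_def
proof (intro conjI)
  show "QR R \<subseteq> Xm" unfolding QR_def by auto
  let ?S = "{A \<in> (unimod :: (real^'m^'m) set). lattice_of A \<in> QR R}"
  show "openin (top_of_set unimod) ?S"
    unfolding openin_euclidean_subtopology_iff
  proof (intro conjI ballI)
    show "?S \<subseteq> unimod" by auto
    fix A0 assume A0: "A0 \<in> ?S"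
    then obtain r where r: "r < R" "\<forall>x. \<exists>v\<in>lattice_of A0. norm (x + v) \<le> r" unfolding QR_def by auto
    have r0: "0 \<le> r" using r(2) norm_ge_zero order_trans by blast
    have "invertible A0" using A0 unfolding unimod_def by (auto simp: invertible_det_nz)
    then obtain Ai where Ai: "A0 ** Ai = mat 1" "Ai ** A0 = mat 1" unfolding invertible_def by blast
    define k where "k = (\<Sum>i\<in>UNIV. \<Sum>j\<in>UNIV. \<bar>Ai $ i $ j\<bar>)"
    have k0: "0 \<le> k" unfolding k_def by (simp add: sum_nonneg)
    define n2 where "n2 = real CARD('m) * real CARD('m)"
    have n20: "0 < n2" unfolding n2_def by simp
    define e where "e = (R - r) / (r * n2 * k + 1)"
    have "0 \<le> r * n2 * k" using r0 n20 k0 by simp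
    hence den: "0 < r * n2 * k + 1" by linarith
    have e0: "e > 0" unfolding e_def using r(1) den by simp
    show "\<exists>e>0. \<forall>A\<in>unimod. dist A A0 < e \<longrightarrow> A \<in> ?S"
    proof (intro exI[of _ e] conjI ballI impI e0)
      fix A assume A: "A \<in> (unimod :: (real^'m^'m) set)" "dist A A0 < e"
      have "invertible A" using A unfolding unimod_def by (auto simp: invertible_det_nz)
      then obtain Ainv where Ainv: "A ** Ainv = mat 1" "Ainv ** A = mat 1" unfolding invertible_def by blast
      define t where "t = n2 * norm (A - A0) * k"
      have Tb: "norm (A *v (Ai *v w)) \<le> (1 + t) * norm w" for w
      proof -
        have "(A - A0) *v (Ai *v w) = A *v (Ai *v w) - A0 *v (Ai *v w)" by (rule matrix_vector_mult_diff_rdistrib)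
        moreover have "A0 *v (Ai *v w) = w" using Ai by (simp add: matrix_vector_mul_assoc)
        ultimately have "A *v (Ai *v w) = w + (A - A0) *v (Ai *v w)" by simp
        hence "norm (A *v (Ai *v w)) \<le> norm w + norm ((A - A0) *v (Ai *v w))" by (metis norm_triangle_ineq)
        also have "norm ((A - A0) *v (Ai *v w)) \<le> (n2 * norm (A - A0)) * (k * norm w)"
        proof -
          have "norm ((A - A0) *v (Ai *v w)) \<le> (\<Sum>i\<in>UNIV. \<Sum>j\<in>UNIV. \<bar>(A - A0) $ i $ j\<bar>) * norm (Ai *v w)"
            by (rule norm_mv_le)
          also have "\<dots> \<le> (n2 * norm (A - A0)) * (k * norm w)"
            unfolding n2_def k_def
            by (intro mult_mono sum_abs_le_norm norm_mv_le) (auto simp: sum_nonneg)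
          finally show ?thesis .
        qed
        finally show ?thesis unfolding t_def by (simp add: algebra_simps)
      qed
      have "t \<le> n2 * e * k" unfolding t_def using A(2) n20 k0 by (simp add: dist_norm mult_right_mono)
      hence "r * (1 + t) \<le> r * (1 + n2 * e * k)" using r0 by (simp add: mult_left_mono)
      also have "r * (1 + n2 * e * k) = r + e * (r * n2 * k)" by (simp add: algebra_simps)
      also have "\<dots> < R"
      proof -
        have "e * (r * n2 * k) \<le> e * (r * n2 * k + 1) - e * 1" by (simp add: algebra_simps)
        also have "e * (r * n2 * k + 1) = R - r" unfolding e_def using den by simp
        finally show ?thesis using e0 by simp
      qed
      finally have rR: "r * (1 + t) < R" .
      have "\<forall>x. \<exists>v\<in>lattice_of A. norm (x + v) \<le> r * (1 + t)"
      proof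
        fix x :: "real^'m"
        define x' where "x' = A0 *v (Ainv *v x)"
        obtain v' where v': "v' \<in> lattice_of A0" "norm (x' + v') \<le> r" using r(2) by blast
        then obtain z where z: "v' = A0 *v vr z" unfolding lattice_of_vr by auto
        have xe: "A *v (Ai *v x') = x" unfolding x'_def using Ai Ainv
          by (simp add: matrix_vector_mul_assoc matrix_mul_assoc)
        have ve: "A *v (Ai *v v') = A *v vr z" unfolding z using Ai
          by (simp add: matrix_vector_mul_assoc matrix_mul_assoc)
        have "x + A *v vr z = A *v (Ai *v (x' + v'))"
          using xe ve by (simp add: matrix_vector_right_distrib)
        hence "norm (x + A *v vr z) \<le> (1 + t) * norm (x' + v')" using Tb by simp
        also have "\<dots> \<le> (1 + t) * r"
          using v'(2) by (intro mult_left_mono) (auto simp: t_def n20 k0 less_imp_le)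
        finally show "\<exists>v\<in>lattice_of A. norm (x + v) \<le> r * (1 + t)"
          unfolding lattice_of_vr by (auto simp: mult.commute)
      qed
      moreover have "lattice_of A \<in> Xm" unfolding Xm_def using A(1) by auto
      ultimately show "A \<in> ?S" using A(1) rR unfolding QR_def by auto
    qed
  qed
qed

lemma Xm_in_QR:
  assumes "L \<in> (Xm :: (real^'m) set set)" shows "\<exists>R::nat. L \<in> QR (real R)"
proof -
  obtain A :: "real^'m^'m" where A: "A \<in> unimod" "L = lattice_of A" using assms unfolding Xm_def by auto
  have "invertible A" using A unfolding unimod_def by (auto simp: invertible_det_nz)
  then obtain Ainv where Ainv: "A ** Ainv = mat 1" "Ainv ** A = mat 1" unfolding invertible_def by blast
  define r where "r = (\<Sum>i\<in>UNIV. norm (column i A))"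
  have bnd: "\<exists>v\<in>L. norm (x + v) \<le> r" for x
  proof -
    define y where "y = Ainv *v x"
    define z :: "int^'m" where "z = (\<chi> i. - \<lfloor>y$i\<rfloor>)"
    define tt where "tt = y + vr z"
    have tt: "0 \<le> tt$i \<and> tt$i < 1" for i unfolding tt_def z_def by (simp add: vr_def) linarith
    have "x + A *v vr z = A *v tt"
      unfolding tt_def y_def using Ainv by (simp add: matrix_vector_right_distrib matrix_vector_mul_assoc)
    also have "\<dots> = (\<Sum>i\<in>UNIV. tt$i *s column i A)" by (rule matrix_mult_sum)
    finally have eq: "x + A *v vr z = (\<Sum>i\<in>UNIV. tt$i *\<^sub>R column i A)" by (simp add: scalar_mult_eq_scaleR)
    have "norm (\<Sum>i\<in>UNIV. tt$i *\<^sub>R column i A) \<le> (\<Sum>i\<in>UNIV. norm (tt$i *\<^sub>R column i A))" by (rule norm_sum)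
    also have "\<dots> \<le> r" unfolding r_def
    proof (rule sum_mono)
      fix i
      have "0 \<le> tt$i" "tt$i \<le> 1" using tt[of i] by auto
      thus "norm (tt$i *\<^sub>R column i A) \<le> norm (column i A)" by (simp add: mult_left_le_one_le)
    qed
    finally have "norm (x + A *v vr z) \<le> r" using eq by simp
    moreover have "A *v vr z \<in> L" using A(2) unfolding lattice_of_vr by auto
    ultimately show ?thesis by blast
  qed
  have "L \<in> QR (real (nat \<lceil>r\<rceil> + 1))" unfolding QR_def using assms bnd
    by (auto intro!: exI[of _ r]) linarith
  thus ?thesis by blast
qed

lemma QR_mono: assumes "R \<le> R'" shows "QR R \<subseteq> QR R'"
proof
  fix L assume "L \<in> QR R"
  then obtain r where r: "L \<in> Xm" "r < R" "\<forall>x. \<exists>v\<in>L. norm (x + v) \<le> r" unfolding QR_def by blast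
  have "r < R'" using r(2) assms by simp
  thus "L \<in> QR R'" unfolding QR_def using r by blast
qed

lemma K_bound:
  assumes "compactin (Xm_top :: (real^'m) set topology) K"
  shows "\<exists>R. \<forall>L\<in>K. \<forall>x. \<exists>v\<in>L. norm (x + v) \<le> R"
proof -
  have top: "topspace (Xm_top :: (real^'m) set topology) = Xm"
  proof -
    have "{A \<in> (unimod :: (real^'m^'m) set). lattice_of A \<in> Xm} = unimod" unfolding Xm_def by auto
    hence "Ppre (Xm :: (real^'m) set set)" unfolding Ppre_def by (simp add: openin_subtopology_self)
    hence "openin Xm_top (Xm :: (real^'m) set set)" using openin_Xm by blast
    hence "Xm \<subseteq> topspace (Xm_top :: (real^'m) set topology)" by (rule openin_subset)
    moreover have "topspace (Xm_top :: (real^'m) set topology) \<subseteq> Xm"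
      using openin_topspace[of "Xm_top :: (real^'m) set topology"] openin_Xm Ppre_def by blast
    ultimately show ?thesis by blast
  qed
  have KX: "K \<subseteq> Xm" using assms top unfolding compactin_def by auto
  have "\<exists>FF. finite FF \<and> FF \<subseteq> range (\<lambda>R::nat. QR (real R)) \<and> K \<subseteq> \<Union>FF"
    using assms unfolding compactin_def
  proof (elim conjE allE impE)
    show "(\<forall>U\<in>range (\<lambda>R::nat. QR (real R)). openin Xm_top U) \<and> K \<subseteq> \<Union> (range (\<lambda>R::nat. QR (real R)))"
      using QR_open KX Xm_in_QR by blast
  qed auto
  then obtain FF where FF: "finite FF" "FF \<subseteq> range (\<lambda>R::nat. QR (real R))" "K \<subseteq> \<Union>FF" by blast
  then obtain RR where RR: "finite RR" "FF = (\<lambda>R::nat. QR (real R)) ` RR"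
    by (meson finite_subset_image)
  define R0 where "R0 = Max (insert 0 RR)"
  have "K \<subseteq> QR (real R0)"
  proof
    fix L assume "L \<in> K"
    then obtain R where "R \<in> RR" "L \<in> QR (real R)" using FF(3) RR(2) by auto
    moreover have "R \<le> R0" unfolding R0_def using RR(1) \<open>R \<in> RR\<close> by simp
    ultimately show "L \<in> QR (real R0)" using QR_mono[of "real R" "real R0"] by auto
  qed
  have "\<forall>x. \<exists>v\<in>L. norm (x + v) \<le> real R0" if LK: "L \<in> K" for L
  proof -
    obtain r where r: "r < real R0" "\<forall>x. \<exists>v\<in>L. norm (x + v) \<le> r"
      using \<open>K \<subseteq> QR (real R0)\<close> LK unfolding QR_def by blast
    show ?thesis using r by (meson less_imp_le order_trans)
  qed
  thus ?thesis by blast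
qed

context fis begin

lemma fq_bound:
  assumes R: "\<forall>x. \<exists>v\<in>lattice_bar H. norm (x + v) \<le> R"
  shows "\<forall>x. fq d (lattice_bar H) x \<le> ereal (real CARD('m) * (4 * R + 1))"
proof
  fix x :: "real^'m"
  let ?L = "lattice_bar H"
  have R0: "0 \<le> R" using R norm_ge_zero order_trans by blast
  obtain v0 where v0: "v0 \<in> ?L" "norm (- vec (2 * R + 1) + v0) \<le> R" using R by blast
  have v0i: "R + 1 \<le> v0$i \<and> v0$i \<le> 3 * R + 1" for i
    using component_le_norm_cart[of "- vec (2 * R + 1) + v0" i] v0(2) by (simp add: abs_le_iff)
  obtain v where v: "v \<in> ?L" "norm (x + v) \<le> R" using R by blast
  have vi: "- R \<le> (x + v)$i \<and> (x + v)$i \<le> R" for i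
    using component_le_norm_cart[of "x + v" i] v(2) by (simp add: abs_le_iff)
  define w where "w = x + (v + v0)"
  have wi: "0 \<le> w$i \<and> w$i \<le> 4 * R + 1" for i
    using vi[of i] v0i[of i] R0 unfolding w_def by simp
  have vv: "v + v0 \<in> ?L" using grpL v(1) v0(1) unfolding grp_def by blast
  have "fq d ?L x \<le> len d w" unfolding w_def by (rule fq_le[OF vv])
  also have "\<dots> = ereal (\<Sum>i\<in>UNIV. w$i)" using wi by (intro len_pos) auto
  also have "(\<Sum>i\<in>UNIV. w$i) \<le> (\<Sum>i\<in>(UNIV::'m set). 4 * R + 1)" by (rule sum_mono) (use wi in auto)
  finally show "fq d ?L x \<le> ereal (real CARD('m) * (4 * R + 1))" by simp
qed

lemma final_est:
  assumes B: "\<forall>x. fq d (lattice_bar H) x \<le> ereal B" and a: "\<alpha> > 0" and M1: "M1 = B + 1"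
    and q: "\<forall>u\<in>{0..M1 powr \<alpha>}. \<forall>u'\<in>{0..M1 powr \<alpha>}. dist u' u < \<eta> \<longrightarrow> dist (u' powr (1/\<alpha>)) (u powr (1/\<alpha>)) < \<epsilon>"
    and p: "\<forall>t\<in>{0..M1}. \<forall>t'\<in>{0..M1}. dist t' t < \<delta> \<longrightarrow> dist (t' powr \<alpha>) (t powr \<alpha>) < \<eta> / 2"
    and c: "real CARD('m) * hh H < min \<delta> 1" and eta: "\<eta> > 0"
  shows "\<bar>hh H * xi_G d \<alpha> H - zeta_L d \<alpha> (lattice_bar H)\<bar> < \<epsilon>"
proof -
  let ?C = "cosets_Zm H" and ?N = "real (index_Zm H)" and ?c = "real CARD('m) * hh H"
  define S where "S = (1 / ?N) * (\<Sum>Y\<in>?C. Phi d Y powr \<alpha>)"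
  define I where "I = (let F = SOME F. fundamental_domain (lattice_bar H) F in
      (1 / measure lebesgue F) * (LINT x:F|lebesgue. real_of_ereal (dist_quot d (lattice_bar H) 0 x) powr \<alpha>))"
  have xi: "hh H * xi_G d \<alpha> H = S powr (1 / \<alpha>)" unfolding S_def by (rule xi_formula[OF B a])
  have zb: "I \<le> (1 / ?N) * (\<Sum>Y\<in>?C. (Phi d Y + ?c) powr \<alpha>)"
    "(1 / ?N) * (\<Sum>Y\<in>?C. (max 0 (Phi d Y - ?c)) powr \<alpha>) \<le> I"
    "zeta_L d \<alpha> (lattice_bar H) = I powr (1 / \<alpha>)"
    using zeta_bounds[OF B a] unfolding I_def by auto
  have Npos: "?N > 0" using N_pos by simp
  have card: "real (card ?C) = ?N" unfolding index_Zm_def ..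
  have c0: "0 \<le> ?c" using hh_pos by simp
  have PhiB: "0 \<le> Phi d Y \<and> Phi d Y \<le> B" for Y
  proof -
    have "0 \<le> fq d (lattice_bar H) (hh H *\<^sub>R vr (rep Y))" "fq d (lattice_bar H) (hh H *\<^sub>R vr (rep Y)) \<le> ereal B"
      using fq_nonneg B by auto
    thus ?thesis unfolding Phi_def by (cases "fq d (lattice_bar H) (hh H *\<^sub>R vr (rep Y))") auto
  qed
  have up1: "(Phi d Y + ?c) powr \<alpha> \<le> Phi d Y powr \<alpha> + \<eta> / 2" for Y
  proof -
    have "dist ((Phi d Y + ?c) powr \<alpha>) (Phi d Y powr \<alpha>) < \<eta> / 2"
      using p PhiB[of Y] c c0 M1 by (auto simp: dist_real_def)
    thus ?thesis unfolding dist_real_def by (smt (verit))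
  qed
  have lo1: "Phi d Y powr \<alpha> - \<eta> / 2 \<le> (max 0 (Phi d Y - ?c)) powr \<alpha>" for Y
  proof -
    have "\<bar>max 0 (Phi d Y - ?c) - Phi d Y\<bar> \<le> ?c" using PhiB[of Y] c0 by auto
    hence "dist ((max 0 (Phi d Y - ?c)) powr \<alpha>) (Phi d Y powr \<alpha>) < \<eta> / 2"
      using p PhiB[of Y] c c0 M1 by (auto simp: dist_real_def)
    thus ?thesis unfolding dist_real_def by (smt (verit))
  qed
  define sA where "sA = (\<Sum>Y\<in>?C. Phi d Y powr \<alpha>)"
  define sU where "sU = (\<Sum>Y\<in>?C. (Phi d Y + ?c) powr \<alpha>)"
  define sL where "sL = (\<Sum>Y\<in>?C. (max 0 (Phi d Y - ?c)) powr \<alpha>)"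
  have "sU \<le> (\<Sum>Y\<in>?C. Phi d Y powr \<alpha> + \<eta> / 2)" unfolding sU_def
    by (rule sum_mono) (rule up1)
  also have "\<dots> = sA + ?N * (\<eta> / 2)" unfolding sA_def by (simp add: sum.distrib card)
  finally have sU1: "sU \<le> sA + ?N * (\<eta> / 2)" .
  have "(\<Sum>Y\<in>?C. Phi d Y powr \<alpha> - \<eta> / 2) \<le> sL" unfolding sL_def
    by (rule sum_mono) (rule lo1)
  moreover have "(\<Sum>Y\<in>?C. Phi d Y powr \<alpha> - \<eta> / 2) = sA - ?N * (\<eta> / 2)"
    unfolding sA_def by (simp add: sum_subtractf card)
  ultimately have sL1: "sA - ?N * (\<eta> / 2) \<le> sL" by simp
  have U: "(1 / ?N) * sU \<le> S + \<eta> / 2"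
  proof -
    have "(1 / ?N) * sU \<le> (1 / ?N) * (sA + ?N * (\<eta> / 2))" using sU1 Npos by (intro mult_left_mono) auto
    also have "\<dots> = S + \<eta> / 2" unfolding S_def sA_def[symmetric] using Npos by (simp add: distrib_left)
    finally show ?thesis .
  qed
  have Lo: "S - \<eta> / 2 \<le> (1 / ?N) * sL"
  proof -
    have "S - \<eta> / 2 = (1 / ?N) * (sA - ?N * (\<eta> / 2))" unfolding S_def sA_def[symmetric] using Npos by (simp add: right_diff_distrib)
    also have "\<dots> \<le> (1 / ?N) * sL" using sL1 Npos by (intro mult_left_mono) auto
    finally show ?thesis .
  qed
  have zb1: "I \<le> (1 / ?N) * sU" and zb2: "(1 / ?N) * sL \<le> I" using zb(1,2) unfolding sU_def sL_def by auto
  have IS: "dist I S < \<eta>" using zb1 zb2 U Lo eta unfolding dist_real_def abs_less_iff by linarith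
  have S0: "0 \<le> S" unfolding S_def using Npos by (simp add: sum_nonneg)
  have "0 \<le> sL" unfolding sL_def by (simp add: sum_nonneg)
  hence I0: "0 \<le> I" using zb2 Npos by (smt (verit) divide_nonneg_nonneg mult_nonneg_nonneg)
  have powM: "t powr \<alpha> \<le> M1 powr \<alpha>" if "0 \<le> t" "t \<le> M1" for t using that a by (intro powr_mono2) auto
  have SM: "S \<le> M1 powr \<alpha>"
  proof -
    have "(\<Sum>Y\<in>?C. Phi d Y powr \<alpha>) \<le> (\<Sum>Y\<in>?C. M1 powr \<alpha>)"
    proof (rule sum_mono)
      fix Y have "0 \<le> Phi d Y" "Phi d Y \<le> M1" using PhiB[of Y] M1 by auto
      thus "Phi d Y powr \<alpha> \<le> M1 powr \<alpha>" by (rule powM)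
    qed
    thus ?thesis unfolding S_def using Npos by (simp add: card field_simps)
  qed
  have IM: "I \<le> M1 powr \<alpha>"
  proof -
    have "(\<Sum>Y\<in>?C. (Phi d Y + ?c) powr \<alpha>) \<le> (\<Sum>Y\<in>?C. M1 powr \<alpha>)"
    proof (rule sum_mono)
      fix Y have "0 \<le> Phi d Y + ?c" "Phi d Y + ?c \<le> M1" using PhiB[of Y] M1 c c0 by auto
      thus "(Phi d Y + ?c) powr \<alpha> \<le> M1 powr \<alpha>" by (rule powM)
    qed
    hence "(1 / ?N) * (\<Sum>Y\<in>?C. (Phi d Y + ?c) powr \<alpha>) \<le> M1 powr \<alpha>"
      using Npos by (simp add: card field_simps)
    thus ?thesis using zb(1) by simp
  qed
  have "dist (I powr (1/\<alpha>)) (S powr (1/\<alpha>)) < \<epsilon>" using q I0 S0 IM SM IS by auto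
  thus ?thesis using xi zb(3) by (simp add: dist_real_def abs_minus_commute)
qed

end

lemma unif_powr:
  fixes a e M :: real
  assumes "a > 0" "e > 0"
  shows "\<exists>d>0. \<forall>t\<in>{0..M}. \<forall>t'\<in>{0..M}. dist t' t < d \<longrightarrow> dist (t' powr a) (t powr a) < (e::real)"
proof -
  have "continuous_on {0..M} (\<lambda>t::real. t powr a)"
    by (rule continuous_on_powr') (use assms in \<open>auto intro: continuous_intros\<close>)
  hence "uniformly_continuous_on {0..M} (\<lambda>t::real. t powr a)"
    by (rule compact_uniformly_continuous) simp
  thus ?thesis unfolding uniformly_continuous_on_def using assms(2) by blast
qed

theorem lemma3p4:
  fixes directed :: bool and \<alpha> :: real and K :: "(real^'m) set set"
  assumes "CARD('m) \<ge> 2"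
    and "\<alpha> > 0"
    and "compactin (Xm_top :: (real^'m) set topology) K"
  shows "\<forall>\<epsilon>>0. \<exists>N::nat. \<forall>H :: (int^'m) set.
           finite_index_subgroup H \<and> lattice_bar H \<in> K \<and> index_Zm H > N \<longrightarrow>
           \<bar>real (index_Zm H) powr (- 1 / real CARD('m)) * xi_G directed \<alpha> H
              - zeta_L directed \<alpha> (lattice_bar H)\<bar> < \<epsilon>"
proof (intro allI impI)
  fix \<epsilon> :: real assume eps: "\<epsilon> > 0"
  obtain R0 where R0: "\<forall>L\<in>K. \<forall>x. \<exists>v\<in>L. norm (x + v) \<le> R0" using K_bound[OF assms(3)] by blast
  define R where "R = max R0 0"
  have R: "\<forall>L\<in>K. \<forall>x. \<exists>v\<in>L. norm (x + v) \<le> R" using R0 unfolding R_def by (meson max.cobounded1 order_trans)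
  define n where "n = real CARD('m)"
  have n0: "n > 0" unfolding n_def by simp
  define B where "B = n * (4 * R + 1)"
  define M1 where "M1 = B + 1"
  obtain \<eta> where eta: "\<eta> > 0" "\<forall>u\<in>{0..M1 powr \<alpha>}. \<forall>u'\<in>{0..M1 powr \<alpha>}. dist u' u < \<eta> \<longrightarrow> dist (u' powr (1/\<alpha>)) (u powr (1/\<alpha>)) < \<epsilon>"
    using unif_powr[of "1/\<alpha>" \<epsilon> "M1 powr \<alpha>"] assms(2) eps by auto
  obtain \<delta> where delta: "\<delta> > 0" "\<forall>t\<in>{0..M1}. \<forall>t'\<in>{0..M1}. dist t' t < \<delta> \<longrightarrow> dist (t' powr \<alpha>) (t powr \<alpha>) < \<eta> / 2"
    using unif_powr[of \<alpha> "\<eta>/2" M1] assms(2) eta(1) by auto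
  define \<kappa> where "\<kappa> = min \<delta> 1"
  have k0: "\<kappa> > 0" unfolding \<kappa>_def using delta(1) by simp
  define N0 where "N0 = nat \<lceil>(n / \<kappa>) powr n\<rceil>"
  show "\<exists>N::nat. \<forall>H :: (int^'m) set.
           finite_index_subgroup H \<and> lattice_bar H \<in> K \<and> index_Zm H > N \<longrightarrow>
           \<bar>real (index_Zm H) powr (- 1 / real CARD('m)) * xi_G directed \<alpha> H
              - zeta_L directed \<alpha> (lattice_bar H)\<bar> < \<epsilon>"
  proof (intro exI[of _ N0] allI impI)
    fix H :: "(int^'m) set"
    assume H: "finite_index_subgroup H \<and> lattice_bar H \<in> K \<and> index_Zm H > N0"
    interpret fis H using H by unfold_locales auto
    have Bd: "\<forall>x. fq directed (lattice_bar H) x \<le> ereal B"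
      unfolding B_def n_def by (rule fq_bound) (use R H in auto)
    have c: "real CARD('m) * hh H < min \<delta> 1"
    proof -
      have "(n / \<kappa>) powr n \<le> real N0" unfolding N0_def by linarith
      also have "\<dots> < real (index_Zm H)" using H by simp
      finally have lt: "(n / \<kappa>) powr n < real (index_Zm H)" .
      have "n / \<kappa> = ((n / \<kappa>) powr n) powr (1 / n)" using n0 k0 by (simp add: powr_powr)
      also have "\<dots> < real (index_Zm H) powr (1 / n)"
        using lt n0 k0 by (intro powr_less_mono2) auto
      finally have gt: "n / \<kappa> < real (index_Zm H) powr (1 / n)" .
      have "hh H = inverse (real (index_Zm H) powr (1 / n))"
        unfolding hh_def n_def by (simp add: powr_minus[symmetric])
      also have "\<dots> < inverse (n / \<kappa>)"
        using gt n0 k0 by (intro less_imp_inverse_less) auto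
      also have "\<dots> = \<kappa> / n" by simp
      finally have "n * hh H < \<kappa>" using n0 by (simp add: field_simps)
      thus ?thesis unfolding \<kappa>_def n_def .
    qed
    have "\<bar>hh H * xi_G directed \<alpha> H - zeta_L directed \<alpha> (lattice_bar H)\<bar> < \<epsilon>"
      by (rule final_est[OF Bd assms(2) M1_def eta(2) delta(2) c eta(1)])
    thus "\<bar>real (index_Zm H) powr (- 1 / real CARD('m)) * xi_G directed \<alpha> H
              - zeta_L directed \<alpha> (lattice_bar H)\<bar> < \<epsilon>" unfolding hh_def .
  qed
qed


end
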